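(* Let $\lambda/\mu$ be a skew shape not containing a $3\times 2$ block of cells, with $\ell(\lambda)\le n$. Let $H$ be a $(\lambda,\mu)$-subnetwork and $\vec p=(p_1,\dots,p_n)$ the unique noncrossing path family covering $H$. Then: (1) $H$ is a generalized wiring diagram; (2) there is a unique set $I\subseteq[n-1]$ such that $\beta(H)=2^{\epsilon(H)}\mathbb B(I)$; in particular $\psi(H)=\tau(I)$; (3) for each $i$, the paths $p_i$ and $p_{i+1}$ intersect if and only if $i\in I$; (4) there is a compatible ordering of the essential intersection points of $H$ in which all essential intersection points of $p_1,p_2$ come first, then all those of $p_2,p_3$, and so on (i.e. those of $p_i,p_{i+1}$ precede those of $p_{i+1},p_{i+2}$).
   Context: Skew shapes: for partitions $\mu\subseteq\lambda$, $\lambda/\mu$ is the set of cells $(i,j)$ with $\mu_i<j\le\lambda_i$ (rows top to bottom); it contains a $3\times2$ block of cells iff $\lambda_{i+2}\ge\mu_i+2$ for some $i$. Lattice paths: $\mathcal L$ is the directed graph on $\mathbb Z^2$ with edges $(a,b)\to(a,b-1)$ (south) and $(a,b)\to(a-1,b-1)$ (southwest). The $\mathbf x$-weight of a path is the product of $x_b$ over its southwest steps $(a,b)\to(a-1,b-1)$. A path from $(a,\infty)$ to $B$ consists of infinitely many south steps along the line $x=a$ down to some $(a,N)$ followed by a finite path $(a,N)\to B$. For $\ell(\lambda)\le n$ put $A(\lambda)_i=(\lambda_i+n-i,\infty)$, $B(\mu)_i=(\mu_i+n-i,0)$. A $(\lambda,\mu)$-path family is $\vec p=(p_1,\dots,p_n)$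 with $p_i:A(\lambda)_i\to B(\mu)_{\sigma(i)}$ for some $\sigma\in\mathfrak S_n$, its type. A $(\lambda,\mu)$-subnetwork is the multiset union $H$ of the edges of the paths of some $(\lambda,\mu)$-path family, which is then said to cover $H$. $\beta(H)=\sum_{\vec p}\mathrm{type}(\vec p)\in\mathbb C[\mathfrak S_n]$ over all path families covering $H$. Two paths intersect if they share a vertex. Paths $p,q$ are noncrossing if there are no vertices $(a_1,b),(a_2,b')$ of $p$ and $(c_1,b),(c_2,b')$ of $q$ with $a_1<c_1$ and $c_2<a_2$; a path family is noncrossing if its paths are pairwise noncrossing; every subnetwork is covered by exactly one noncrossing family. If $(p_1,\dots,p_n)$ is the noncrossing family covering $H$, an essential intersection point of $H$ is a vertex lying on both $p_i$ and $p_{i+1}$ (some $i$) such that the preceding vertex on each of these two paths is not in $p_i\cap p_{i+1}$. An ordering $(u_1,\dots,u_\ell)$ of the essential intersection points is compatible if there is no directed path in $H$ from $u_b$ to $u_a$ whenever $a<b$. $H$ is a generalized wiring diagram if no vertex lies on three paths of a covering family (independent of the family). For a generalized wiring diagram, $\theta(\beta(H))=2^{e}\psi$ for a unique integer $e$ and $\psi\in\mathcal B_n$; set $\epsilon(H)=e$, $\psi(H)=\psi$. $\mathrm{TL}_n(2)$, $\mathcal B_n$, $s_i=(i,i+1)$ and $\theta:\mathbb C[\mathfrak S_n]\to\mathrm{TL}_n(2)$, $\theta(s_i)=t_i-1$, are as usual: $\mathrm{TL}_n(2)$ is generated by $t_1,\dots,t_{n-1}$ with $t_i^2=2t_i$,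 $t_it_jt_i=t_i$ ($|i-j|=1$), $t_it_j=t_jt_i$ ($|i-j|\ge2$), with basis $\mathcal B_n$ of Kauffman diagrams. For $I\subseteq[n-1]$, $\mathbb B(I)=\prod_{i\in I}(1+s_i)\in\mathbb C[\mathfrak S_n]$ and $\tau(I)=\prod_{i\in I}t_i\in\mathcal B_n$ (products in increasing order of indices), so $\theta(\mathbb B(I))=\tau(I)$. *)

theory Defs
  imports Complex_Main "HOL-Combinatorics.Transposition" "HOL-Combinatorics.Permutations"
begin

text \<open>A partition is a weakly decreasing, finitely supported sequence lam 1, lam 2, ...
  (index 0 is unused).\<close>
definition is_partition :: "(nat \<Rightarrow> nat) \<Rightarrow> bool" where
  "is_partition lam \<longleftrightarrow> (\<forall>i j. 1 \<le> i \<and> i \<le> j \<longrightarrow> lam j \<le> lam i)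
     \<and> finite {i. 1 \<le> i \<and> lam i \<noteq> 0}"

definition length_le :: "(nat \<Rightarrow> nat) \<Rightarrow> nat \<Rightarrow> bool" where
  "length_le lam n \<longleftrightarrow> (\<forall>i. n < i \<longrightarrow> lam i = 0)"

definition part_contained :: "(nat \<Rightarrow> nat) \<Rightarrow> (nat \<Rightarrow> nat) \<Rightarrow> bool" where
  "part_contained mu lam \<longleftrightarrow> (\<forall>i\<ge>1. mu i \<le> lam i)"

text \<open>lam/mu contains a 3x2 block of cells iff lam (i+2) >= mu i + 2 for some i.\<close>
definition has_3x2_block :: "(nat \<Rightarrow> nat) \<Rightarrow> (nat \<Rightarrow> nat) \<Rightarrow> bool" where
  "has_3x2_block lam mu \<longleftrightarrow> (\<exists>i\<ge>1. lam (i + 2) \<ge> mu i + 2)"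

type_synonym vertex = "int \<times> int"

text \<open>A path from (a,infinity) to (c,0) visits exactly one vertex at every height b >= 0;
  we encode it by its x-coordinate p b at height b. Steps go south or southwest.\<close>
type_synonym lpath = "nat \<Rightarrow> int"

definition vertices :: "lpath \<Rightarrow> vertex set" where
  "vertices p = {(p b, int b) | b. True}"

definition edge_at :: "lpath \<Rightarrow> nat \<Rightarrow> vertex \<times> vertex" where
  "edge_at p b = ((p (Suc b), int (Suc b)), (p b, int b))"

definition lattice_path :: "lpath \<Rightarrow> int \<Rightarrow> vertex \<Rightarrow> bool" where
  "lattice_path p a B \<longleftrightarrow> (p 0, 0) = B
     \<and> (\<forall>b. p (Suc b) = p b \<or> p (Suc b) = p b + 1)
     \<and> (\<exists>N. \<forall>b\<ge>N. p b = a)"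

definition Ax :: "(nat \<Rightarrow> nat) \<Rightarrow> nat \<Rightarrow> nat \<Rightarrow> int" where
  "Ax lam n i = int (lam i) + int n - int i"

definition Bv :: "(nat \<Rightarrow> nat) \<Rightarrow> nat \<Rightarrow> nat \<Rightarrow> vertex" where
  "Bv mu n i = (int (mu i) + int n - int i, 0)"

text \<open>A (lam,mu)-path family of type sigma; paths are indexed by 1..n
  (set to the constant 0 outside, so that families are determined by p_1..p_n).\<close>
definition path_family ::
  "(nat \<Rightarrow> nat) \<Rightarrow> (nat \<Rightarrow> nat) \<Rightarrow> nat \<Rightarrow> (nat \<Rightarrow> lpath) \<Rightarrow> (nat \<Rightarrow> nat) \<Rightarrow> bool" where
  "path_family lam mu n P \<sigma> \<longleftrightarrow> \<sigma> permutes {1..n}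
     \<and> (\<forall>i\<in>{1..n}. lattice_path (P i) (Ax lam n i) (Bv mu n (\<sigma> i)))
     \<and> (\<forall>i. i \<notin> {1..n} \<longrightarrow> P i = (\<lambda>_. 0))"

type_synonym subnetwork = "vertex \<times> vertex \<Rightarrow> nat"

definition edge_mult :: "nat \<Rightarrow> (nat \<Rightarrow> lpath) \<Rightarrow> subnetwork" where
  "edge_mult n P e = card {(i, b). i \<in> {1..n} \<and> edge_at (P i) b = e}"

definition covers :: "nat \<Rightarrow> (nat \<Rightarrow> lpath) \<Rightarrow> subnetwork \<Rightarrow> bool" where
  "covers n P H \<longleftrightarrow> (\<forall>e. H e = edge_mult n P e)"

definition noncrossing_paths :: "lpath \<Rightarrow> lpath \<Rightarrow> bool" where
  "noncrossing_paths p q \<longleftrightarrow> \<not> (\<exists>a1 a2 c1 c2 b b'.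
      (a1, b) \<in> vertices p \<and> (a2, b') \<in> vertices p \<and>
      (c1, b) \<in> vertices q \<and> (c2, b') \<in> vertices q \<and> a1 < c1 \<and> c2 < a2)"

definition noncrossing_family :: "nat \<Rightarrow> (nat \<Rightarrow> lpath) \<Rightarrow> bool" where
  "noncrossing_family n P \<longleftrightarrow> (\<forall>i\<in>{1..n}. \<forall>j\<in>{1..n}. noncrossing_paths (P i) (P j))"

definition paths_intersect :: "lpath \<Rightarrow> lpath \<Rightarrow> bool" where
  "paths_intersect p q \<longleftrightarrow> vertices p \<inter> vertices q \<noteq> {}"

definition gen_wiring_diagram ::
  "(nat \<Rightarrow> nat) \<Rightarrow> (nat \<Rightarrow> nat) \<Rightarrow> nat \<Rightarrow> subnetwork \<Rightarrow> bool" where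
  "gen_wiring_diagram lam mu n H \<longleftrightarrow> (\<forall>Q \<sigma>. path_family lam mu n Q \<sigma> \<and> covers n Q H \<longrightarrow>
     \<not> (\<exists>v i j k. i \<in> {1..n} \<and> j \<in> {1..n} \<and> k \<in> {1..n} \<and> i \<noteq> j \<and> j \<noteq> k \<and> i \<noteq> k
          \<and> v \<in> vertices (Q i) \<and> v \<in> vertices (Q j) \<and> v \<in> vertices (Q k)))"

text \<open>Elements of C[S_n] are functions from permutations of {1..n} to complex numbers.
  Product convention: u v means "first u, then v", i.e. the function v o u.\<close>
type_synonym galg = "(nat \<Rightarrow> nat) \<Rightarrow> complex"

definition ga_basis :: "(nat \<Rightarrow> nat) \<Rightarrow> galg" where
  "ga_basis w = (\<lambda>v. if v = w then 1 else 0)"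

definition ga_add :: "galg \<Rightarrow> galg \<Rightarrow> galg" where
  "ga_add f g = (\<lambda>w. f w + g w)"

definition ga_mult :: "nat \<Rightarrow> galg \<Rightarrow> galg \<Rightarrow> galg" where
  "ga_mult n f g = (\<lambda>w. \<Sum>u\<in>{u. u permutes {1..n}}. \<Sum>v\<in>{v. v permutes {1..n}}.
       if v \<circ> u = w then f u * g v else 0)"

definition sadj :: "nat \<Rightarrow> nat \<Rightarrow> nat" where
  "sadj i = transpose i (Suc i)"

definition BB :: "nat \<Rightarrow> nat set \<Rightarrow> galg" where
  "BB n I = foldl (\<lambda>acc i. ga_mult n acc (ga_add (ga_basis id) (ga_basis (sadj i))))
              (ga_basis id) (sorted_list_of_set I)"

definition beta :: "(nat \<Rightarrow> nat) \<Rightarrow> (nat \<Rightarrow> nat) \<Rightarrow> nat \<Rightarrow> subnetwork \<Rightarrow> galg" where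
  "beta lam mu n H = (\<lambda>w. of_nat (card {Q. path_family lam mu n Q w \<and> covers n Q H}))"

definition preceding :: "lpath \<Rightarrow> vertex \<Rightarrow> vertex \<Rightarrow> bool" where
  "preceding p v u \<longleftrightarrow> (\<exists>b. v = (p b, int b) \<and> u = (p (Suc b), int (Suc b)))"

definition ess_points :: "(nat \<Rightarrow> lpath) \<Rightarrow> nat \<Rightarrow> vertex set" where
  "ess_points P i = {v. v \<in> vertices (P i) \<inter> vertices (P (Suc i))
      \<and> (\<forall>u. preceding (P i) v u \<longrightarrow> u \<notin> vertices (P i) \<inter> vertices (P (Suc i)))
      \<and> (\<forall>u. preceding (P (Suc i)) v u \<longrightarrow> u \<notin> vertices (P i) \<inter> vertices (P (Suc i)))}"

definition all_ess_points :: "nat \<Rightarrow> (nat \<Rightarrow> lpath) \<Rightarrow> vertex set" where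
  "all_ess_points n P = (\<Union>i\<in>{1..<n}. ess_points P i)"

definition reach :: "subnetwork \<Rightarrow> (vertex \<times> vertex) set" where
  "reach H = {(u, v). 0 < H (u, v)}\<^sup>*"

definition compatible_ordering ::
  "nat \<Rightarrow> (nat \<Rightarrow> lpath) \<Rightarrow> subnetwork \<Rightarrow> vertex list \<Rightarrow> bool" where
  "compatible_ordering n P H us \<longleftrightarrow> distinct us \<and> set us = all_ess_points n P
     \<and> (\<forall>a b. a < b \<and> b < length us \<longrightarrow> (us ! b, us ! a) \<notin> reach H)"

end

theory Submission
  imports Defs
begin


definition wS :: "nat set \<Rightarrow> nat \<Rightarrow> nat" where
  "wS S = foldl (\<lambda>f i. sadj i \<circ> f) id (sorted_list_of_set S)"

lemma foldl_sadj_gen: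
  "foldl (\<lambda>f i. sadj i \<circ> f) (g::nat\<Rightarrow>nat) xs = foldl (\<lambda>f i. sadj i \<circ> f) id xs \<circ> g"
proof (induction xs arbitrary: g)
  case Nil then show ?case by simp
next
  case (Cons x xs)
  have 1: "foldl (\<lambda>f i. sadj i \<circ> f) g (x # xs) = foldl (\<lambda>f i. sadj i \<circ> f) (sadj x \<circ> g) xs"
    by (simp only: foldl_Cons)
  have 2: "foldl (\<lambda>f i. sadj i \<circ> f) id (x # xs) = foldl (\<lambda>f i. sadj i \<circ> f) (sadj x) xs"
    by (simp only: foldl_Cons comp_id)
  show ?case unfolding 1 2 Cons.IH[of "sadj x \<circ> g"] Cons.IH[of "sadj x"] by (simp only: comp_assoc)
qed

lemma foldl_sadj_append:
  "foldl (\<lambda>f i. sadj i \<circ> f) id (xs @ ys) = foldl (\<lambda>f i. sadj i \<circ> f) id ys \<circ> foldl (\<lambda>f i. sadj i \<circ> f) id xs"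
  by (simp only: foldl_append, rule foldl_sadj_gen)

lemma sorted_list_of_set_Un_less:
  assumes "finite A" "finite B" "\<forall>a\<in>A. \<forall>b\<in>B. a < b"
  shows "sorted_list_of_set (A \<union> B) = sorted_list_of_set A @ sorted_list_of_set (B::nat set)"
proof -
  have "sorted_wrt (<) (sorted_list_of_set A @ sorted_list_of_set B)"
    using assms by (auto simp: sorted_wrt_append)
  moreover have "sorted_wrt (<) (sorted_list_of_set (A \<union> B))" by simp
  moreover have "set (sorted_list_of_set A @ sorted_list_of_set B) = set (sorted_list_of_set (A \<union> B))"
    using assms by simp
  ultimately show ?thesis using strict_sorted_equal by metis
qed

lemma wS_Un:
  assumes "finite A" "finite B" "\<forall>a\<in>A. \<forall>b\<in>B. a < b"
  shows "wS (A \<union> B) = wS B \<circ> wS A"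
  unfolding wS_def using sorted_list_of_set_Un_less[OF assms] foldl_sadj_append by simp

lemma wS_empty [simp]: "wS {} = id" by (simp add: wS_def)
lemma wS_single [simp]: "wS {i} = sadj i" by (simp add: wS_def)

lemma sadj_comm:
  assumes "Suc i < j"
  shows "sadj i \<circ> sadj j = sadj j \<circ> sadj i"
proof
  fix x
  show "(sadj i \<circ> sadj j) x = (sadj j \<circ> sadj i) x"
    using assms unfolding sadj_def transpose_def comp_def by simp
qed

lemma sadj_invol [simp]: "sadj i \<circ> sadj i = id"
  by (simp add: sadj_def)

lemma sadj_sadj [simp]: "sadj i (sadj i y) = y"
  by (simp add: sadj_def)

lemma sadj_comm_foldl:
  assumes "\<forall>x\<in>set xs. Suc i < x"
  shows "sadj i \<circ> foldl (\<lambda>f i. sadj i \<circ> f) id xs = foldl (\<lambda>f i. sadj i \<circ> f) id xs \<circ> sadj i"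
  using assms
proof (induction xs rule: rev_induct)
  case Nil then show ?case by simp
next
  case (snoc x xs)
  have e: "foldl (\<lambda>f i. sadj i \<circ> f) id (xs @ [x]) = sadj x \<circ> foldl (\<lambda>f i. sadj i \<circ> f) id xs"
    by simp
  have "Suc i < x" using snoc.prems by simp
  then have "sadj i \<circ> sadj x = sadj x \<circ> sadj i" by (rule sadj_comm)
  moreover have "sadj i \<circ> foldl (\<lambda>f i. sadj i \<circ> f) id xs = foldl (\<lambda>f i. sadj i \<circ> f) id xs \<circ> sadj i"
    by (rule snoc.IH) (use snoc.prems in simp)
  ultimately show ?case unfolding e
    by (metis (no_types, lifting) comp_assoc)
qed

lemma sadj_comm_wS:
  assumes "finite U" "\<forall>x\<in>U. Suc i < x"
  shows "sadj i \<circ> wS U = wS U \<circ> sadj i"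
  unfolding wS_def using assms by (intro sadj_comm_foldl) simp

lemma sadj_wS_toggle:
  assumes "finite T" "Suc i \<notin> T"
  shows "sadj i \<circ> wS T = wS ((T - {i}) \<union> ({i} - T))"
proof -
  define L where "L = {x\<in>T. x < i}"
  define U where "U = {x\<in>T. i < x}"
  have fL: "finite L" and fU: "finite U" using assms by (auto simp: L_def U_def)
  have U2: "\<forall>x\<in>U. Suc i < x" using assms by (auto simp: U_def) (metis Suc_lessI)
  have cU: "sadj i \<circ> wS U = wS U \<circ> sadj i" using sadj_comm_wS[OF fU U2] .
  then have cU': "\<And>y. sadj i (wS U y) = wS U (sadj i y)" by (metis comp_apply)
  show ?thesis
  proof (cases "i \<in> T")
    case True
    have T: "T = L \<union> ({i} \<union> U)" using True by (auto simp: L_def U_def)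
    have T': "(T - {i}) \<union> ({i} - T) = L \<union> U" using True by (auto simp: L_def U_def)
    have "wS T = wS ({i} \<union> U) \<circ> wS L" unfolding T by (rule wS_Un) (use fL fU in \<open>auto simp: L_def U_def\<close>)
    also have "wS ({i} \<union> U) = wS U \<circ> sadj i" by (subst wS_Un) (use fU in \<open>auto simp: U_def\<close>)
    finally have a: "wS T = wS U \<circ> sadj i \<circ> wS L" .
    have b: "wS (L \<union> U) = wS U \<circ> wS L" by (rule wS_Un) (use fL fU in \<open>auto simp: L_def U_def\<close>)
    show ?thesis unfolding T' b a by (simp add: fun_eq_iff cU')
  next
    case False
    have T: "T = L \<union> U" using False by (auto simp: L_def U_def) (metis linorder_neqE_nat)
    have T': "(T - {i}) \<union> ({i} - T) = L \<union> ({i} \<union> U)" using False by (auto simp: L_def U_def)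
    have a: "wS T = wS U \<circ> wS L" unfolding T by (rule wS_Un) (use fL fU in \<open>auto simp: L_def U_def\<close>)
    have "wS (L \<union> ({i} \<union> U)) = wS ({i} \<union> U) \<circ> wS L" by (rule wS_Un) (use fL fU in \<open>auto simp: L_def U_def\<close>)
    also have "wS ({i} \<union> U) = wS U \<circ> sadj i" by (subst wS_Un) (use fU in \<open>auto simp: U_def\<close>)
    finally have b: "wS (L \<union> ({i} \<union> U)) = wS U \<circ> sadj i \<circ> wS L" .
    show ?thesis unfolding T' b a by (simp add: fun_eq_iff cU')
  qed
qed

definition swp :: "nat set \<Rightarrow> nat \<Rightarrow> nat" where
  "swp D j = (if j \<in> D then Suc j else if 0 < j \<and> j - 1 \<in> D then j - 1 else j)"

lemma swp_empty [simp]: "swp {} = id" by (auto simp: swp_def fun_eq_iff)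

lemma swp_insert:
  assumes "i \<notin> D" "0 \<notin> insert i D" "\<forall>x\<in>insert i D. Suc x \<notin> insert i D"
  shows "swp (insert i D) = sadj i \<circ> swp D"
proof
  fix j
  have sadj_other: "\<And>y. y \<noteq> i \<Longrightarrow> y \<noteq> Suc i \<Longrightarrow> sadj i y = y" by (simp add: sadj_def)
  have si: "sadj i i = Suc i" "sadj i (Suc i) = i" by (simp_all add: sadj_def)
  show "swp (insert i D) j = (sadj i \<circ> swp D) j"
  proof (cases "j \<in> D")
    case True
    then have "Suc j \<noteq> i" "Suc j \<noteq> Suc i" using assms by auto
    then show ?thesis using True by (simp add: swp_def sadj_other)
  next
    case jD: False
    show ?thesis
    proof (cases "0 < j \<and> j - 1 \<in> D")
      case True
      then have "j \<noteq> i" using assms by (metis Suc_pred' insertCI)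
      moreover have "j - 1 \<noteq> i" "j - 1 \<noteq> Suc i" using True assms by auto
      ultimately show ?thesis using True jD by (simp add: swp_def sadj_other)
    next
      case False
      have sD: "swp D j = j" using False jD unfolding swp_def by auto
      consider "j = i" | "j = Suc i" | "j \<noteq> i" "j \<noteq> Suc i" by blast
      then show ?thesis
      proof cases
        case 1 then show ?thesis using sD si False jD by (simp add: swp_def)
      next
        case 2 then show ?thesis using sD si assms by (simp add: swp_def)
      next
        case 3
        then have "\<not> (0 < j \<and> j - 1 = i)" by auto
        then have "swp (insert i D) j = j" using False jD 3 unfolding swp_def by auto
        then show ?thesis using sD 3 by (simp add: sadj_other)
      qed
    qed
  qed
qed

lemma swp_wS:
  assumes "finite D" "finite S" "0 \<notin> D" "\<forall>x\<in>D. Suc x \<notin> D" "\<forall>x\<in>D. Suc x \<notin> S"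
  shows "wS ((S - D) \<union> (D - S)) = swp D \<circ> wS S"
  using assms
proof (induction D rule: finite_induct)
  case empty then show ?case by simp
next
  case (insert i D)
  define T where "T = (S - D) \<union> (D - S)"
  have IH: "wS T = swp D \<circ> wS S" using insert by (simp add: T_def comp_def)
  have fT: "finite T" using insert by (simp add: T_def)
  have sT: "Suc i \<notin> T" using insert by (auto simp: T_def)
  have e: "(S - insert i D) \<union> (insert i D - S) = (T - {i}) \<union> ({i} - T)"
    using insert by (auto simp: T_def)
  have sw: "swp (insert i D) = sadj i \<circ> swp D" using swp_insert[of i D] insert by simp
  have "wS ((S - insert i D) \<union> (insert i D - S)) = sadj i \<circ> wS T"
    unfolding e by (rule sadj_wS_toggle[OF fT sT, symmetric])
  also have "\<dots> = (sadj i \<circ> swp D) \<circ> wS S" unfolding IH by (simp add: comp_assoc)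
  finally show ?case unfolding sw .
qed

lemma sadj_permutes: "1 \<le> i \<Longrightarrow> i < n \<Longrightarrow> sadj i permutes {1..n}"
  unfolding sadj_def by (rule permutes_swap_id) auto

lemma foldl_sadj_permutes:
  "set xs \<subseteq> {1..<n} \<Longrightarrow> foldl (\<lambda>f i. sadj i \<circ> f) id xs permutes {1..n}"
proof (induction xs rule: rev_induct)
  case Nil then show ?case by (simp only: foldl_Nil) (rule permutes_id)
next
  case (snoc x xs)
  have p: "foldl (\<lambda>f i. sadj i \<circ> f) id xs permutes {1..n}" by (rule snoc.IH) (use snoc.prems in auto)
  have "sadj x permutes {1..n}" by (rule sadj_permutes) (use snoc.prems in auto)
  then show ?case using p by (simp only: foldl_append foldl_Cons foldl_Nil permutes_compose)
qed

lemma wS_permutes: "finite S \<Longrightarrow> S \<subseteq> {1..<n} \<Longrightarrow> wS S permutes {1..n}"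
  unfolding wS_def by (rule foldl_sadj_permutes) simp

lemma foldl_sadj_fix:
  "\<forall>x\<in>set xs. Suc x < k \<Longrightarrow> foldl (\<lambda>f i. sadj i \<circ> f) id xs k = k"
proof (induction xs rule: rev_induct)
  case Nil then show ?case by simp
next
  case (snoc x xs)
  then show ?case by (simp add: sadj_def transpose_def)
qed

lemma wS_Max:
  assumes "finite S" "S \<noteq> {}"
  shows "wS S (Suc (Max S)) = Max S"
proof -
  define m where "m = Max S"
  have mS: "m \<in> S" using assms by (simp add: m_def)
  have S: "S = (S - {m}) \<union> {m}" using mS by auto
  have lt: "\<forall>x\<in>S - {m}. x < m"
  proof
    fix x assume "x \<in> S - {m}"
    then have "x \<le> m" "x \<noteq> m" using assms by (auto simp: m_def)
    then show "x < m" by simp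
  qed
  have "wS ((S - {m}) \<union> {m}) = wS {m} \<circ> wS (S - {m})"
    by (rule wS_Un) (use assms lt in auto)
  then have "wS S = sadj m \<circ> wS (S - {m})" using S by (metis wS_single)
  moreover have "wS (S - {m}) (Suc m) = Suc m"
    unfolding wS_def using assms lt by (intro foldl_sadj_fix) auto
  ultimately show ?thesis by (simp add: m_def sadj_def)
qed

lemma wS_eq_sadj:
  assumes "finite S" "wS S = sadj i"
  shows "i \<in> S"
proof (cases "S = {}")
  case True
  then have "sadj i i = i" using assms by simp
  then show ?thesis by (simp add: sadj_def)
next
  case False
  have "sadj i (Suc (Max S)) = Max S" using wS_Max[OF assms(1) False] assms(2) by simp
  then have "Max S = i" unfolding sadj_def transpose_def
    by (cases "Suc (Max S) = i"; cases "Max S = i"; simp)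
  then show ?thesis using False assms(1) Max_in by blast
qed



definition wL :: "nat set \<Rightarrow> nat list \<Rightarrow> nat \<Rightarrow> nat" where
  "wL S xs = foldl (\<lambda>f i. if i \<in> S then sadj i \<circ> f else f) id xs"

lemma wL_filter_gen:
  "foldl (\<lambda>f i. if i \<in> S then sadj i \<circ> f else f) (g::nat\<Rightarrow>nat) xs
     = foldl (\<lambda>f i. sadj i \<circ> f) g (filter (\<lambda>i. i \<in> S) xs)"
  by (induction xs arbitrary: g) auto

lemma wL_filter: "wL S xs = foldl (\<lambda>f i. sadj i \<circ> f) id (filter (\<lambda>i. i \<in> S) xs)"
  unfolding wL_def by (rule wL_filter_gen)

lemma filter_sorted_list_of_set:
  assumes "finite I" "S \<subseteq> I"
  shows "filter (\<lambda>i. i \<in> S) (sorted_list_of_set I) = sorted_list_of_set (S::nat set)"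
proof -
  have "sorted_wrt (<) (filter (\<lambda>i. i \<in> S) (sorted_list_of_set I))"
    by (rule sorted_wrt_filter) simp
  moreover have "sorted_wrt (<) (sorted_list_of_set S)" by simp
  moreover have "set (sorted_list_of_set S) = set (filter (\<lambda>i. i \<in> S) (sorted_list_of_set I))"
    using assms finite_subset[OF assms(2) assms(1)] by auto
  ultimately show ?thesis using strict_sorted_equal by metis
qed

lemma wL_sorted:
  assumes "finite I" "S \<subseteq> I"
  shows "wL S (sorted_list_of_set I) = wS S"
  unfolding wL_filter wS_def filter_sorted_list_of_set[OF assms] ..

lemma wL_cong:
  assumes "\<forall>x\<in>set xs. (x \<in> S \<longleftrightarrow> x \<in> S')"
  shows "wL S xs = wL S' xs"
proof -
  have "filter (\<lambda>i. i \<in> S) xs = filter (\<lambda>i. i \<in> S') xs"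
    using assms by (intro filter_cong) auto
  then show ?thesis unfolding wL_filter by simp
qed

lemma wL_permutes:
  assumes "set xs \<subseteq> {1..<n}"
  shows "wL S xs permutes {1..n}"
  unfolding wL_filter by (rule foldl_sadj_permutes) (use assms in auto)

lemma wL_snoc: "wL S (xs @ [m]) = (if m \<in> S then sadj m \<circ> wL S xs else wL S xs)"
  by (simp add: wL_def)

lemma ga_mult_step:
  assumes m: "1 \<le> m" "m < n"
  shows "ga_mult n f (ga_add (ga_basis id) (ga_basis (sadj m))) w
     = (if w permutes {1..n} then f w + f (sadj m \<circ> w) else 0)"
proof -
  define Perms where "Perms = {p. p permutes {1..n::nat}}"
  have fin: "finite Perms" unfolding Perms_def by (rule finite_permutations) simp
  have ne: "id \<noteq> sadj m" proof assume "id = sadj m" then have "id m = sadj m m" by simp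
    then show False by (simp add: sadj_def) qed
  have idP: "id \<in> Perms" unfolding Perms_def by simp
  have sP: "sadj m \<in> Perms" unfolding Perms_def using sadj_permutes[OF m] by simp
  define g where "g = ga_add (ga_basis id) (ga_basis (sadj m))"
  have inner: "(\<Sum>v\<in>Perms. if v \<circ> u = w then f u * g v else 0)
      = (if u = w then f u else 0) + (if sadj m \<circ> u = w then f u else 0)" for u
  proof -
    have "(\<Sum>v\<in>Perms. if v \<circ> u = w then f u * g v else 0)
       = (\<Sum>v\<in>Perms. (if v = id then (if u = w then f u else 0) else 0)
            + (if v = sadj m then (if sadj m \<circ> u = w then f u else 0) else 0))"
    proof (rule sum.cong[OF refl])
      fix v
      show "(if v \<circ> u = w then f u * g v else 0) =
         (if v = id then (if u = w then f u else 0) else 0)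
            + (if v = sadj m then (if sadj m \<circ> u = w then f u else 0) else 0)"
        using ne unfolding g_def ga_add_def ga_basis_def by auto
    qed
    also have "\<dots> = (if u = w then f u else 0) + (if sadj m \<circ> u = w then f u else 0)"
      by (simp add: sum.distrib fin idP sP)
    finally show ?thesis .
  qed
  have eqv: "(sadj m \<circ> u = w) = (u = sadj m \<circ> w)" for u
  proof
    assume "sadj m \<circ> u = w" then have "sadj m \<circ> (sadj m \<circ> u) = sadj m \<circ> w" by simp
    then show "u = sadj m \<circ> w" by (simp add: comp_assoc[symmetric])
  next
    assume "u = sadj m \<circ> w" then show "sadj m \<circ> u = w" by (simp add: comp_assoc[symmetric])
  qed
  have pw: "(sadj m \<circ> w \<in> Perms) = (w \<in> Perms)"
  proof
    assume "sadj m \<circ> w \<in> Perms"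
    then have "sadj m \<circ> (sadj m \<circ> w) \<in> Perms" using sP unfolding Perms_def by (simp add: permutes_compose)
    then show "w \<in> Perms" by (simp add: comp_assoc[symmetric])
  next
    assume "w \<in> Perms" then show "sadj m \<circ> w \<in> Perms" using sP unfolding Perms_def by (simp add: permutes_compose)
  qed
  have "ga_mult n f g w = (\<Sum>u\<in>Perms. (if u = w then f u else 0) + (if u = sadj m \<circ> w then f u else 0))"
    unfolding ga_mult_def Perms_def[symmetric] using inner eqv by simp
  also have "\<dots> = (if w \<in> Perms then f w else 0) + (if sadj m \<circ> w \<in> Perms then f (sadj m \<circ> w) else 0)"
    by (simp add: sum.distrib fin)
  also have "\<dots> = (if w permutes {1..n} then f w + f (sadj m \<circ> w) else 0)"
    using pw unfolding Perms_def by auto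
  finally show ?thesis unfolding g_def .
qed

lemma card_step:
  assumes "m \<notin> set xs"
  shows "card {S. S \<subseteq> set (xs @ [m]) \<and> w = wL S (xs @ [m])}
    = card {S. S \<subseteq> set xs \<and> w = wL S xs} + card {S. S \<subseteq> set xs \<and> sadj m \<circ> w = wL S xs}"
proof -
  define A where "A = {S. S \<subseteq> set xs \<and> w = wL S xs}"
  define B where "B = {S. S \<subseteq> set xs \<and> sadj m \<circ> w = wL S xs}"
  have cg: "wL S xs = wL (S - {m}) xs" for S by (rule wL_cong) (use assms in auto)
  have eq: "{S. S \<subseteq> set (xs @ [m]) \<and> w = wL S (xs @ [m])} = A \<union> insert m ` B"
  proof (rule set_eqI, rule iffI)
    fix S assume "S \<in> {S. S \<subseteq> set (xs @ [m]) \<and> w = wL S (xs @ [m])}"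
    then have S: "S \<subseteq> insert m (set xs)" "w = wL S (xs @ [m])" by auto
    show "S \<in> A \<union> insert m ` B"
    proof (cases "m \<in> S")
      case False
      then have "S \<subseteq> set xs" "w = wL S xs" using S by (auto simp: wL_snoc)
      then show ?thesis by (simp add: A_def)
    next
      case True
      have c1: "wL S xs = wL (S - {m}) xs" by (rule cg)
      have "w = sadj m \<circ> wL (S - {m}) xs" using S(2) True unfolding wL_snoc c1 by simp
      then have "sadj m \<circ> w = wL (S - {m}) xs" by (simp add: comp_assoc[symmetric])
      moreover have "S - {m} \<subseteq> set xs" using S by auto
      ultimately have "S - {m} \<in> B" by (simp add: B_def)
      moreover have "S = insert m (S - {m})" using True by auto
      ultimately show ?thesis by blast
    qed
  next
    fix S assume "S \<in> A \<union> insert m ` B"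
    then show "S \<in> {S. S \<subseteq> set (xs @ [m]) \<and> w = wL S (xs @ [m])}"
    proof
      assume "S \<in> A"
      then have "S \<subseteq> set xs" "w = wL S xs" by (auto simp: A_def)
      moreover have "m \<notin> S" using \<open>S \<subseteq> set xs\<close> assms by auto
      ultimately show ?thesis by (auto simp: wL_snoc)
    next
      assume "S \<in> insert m ` B"
      then obtain T where T: "S = insert m T" "T \<subseteq> set xs" "sadj m \<circ> w = wL T xs" by (auto simp: B_def)
      have mT: "m \<notin> T" using T assms by auto
      have "wL S xs = wL T xs" by (rule wL_cong) (use T(1) assms in auto)
      then have "wL S (xs @ [m]) = sadj m \<circ> (sadj m \<circ> w)" using T by (simp add: wL_snoc)
      then have "wL S (xs @ [m]) = w" by (simp add: comp_assoc[symmetric])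
      then show ?thesis using T by auto
    qed
  qed
  have fA: "finite A" unfolding A_def by (rule finite_subset[of _ "Pow (set xs)"]) auto
  have fB: "finite B" unfolding B_def by (rule finite_subset[of _ "Pow (set xs)"]) auto
  have dj: "A \<inter> insert m ` B = {}"
  proof (rule ccontr)
    assume "A \<inter> insert m ` B \<noteq> {}"
    then obtain S where "S \<in> A" "m \<in> S" by blast
    then show False using assms unfolding A_def by auto
  qed
  have inj: "inj_on (insert m) B"
  proof (rule inj_onI)
    fix X Y assume "X \<in> B" "Y \<in> B" "insert m X = insert m Y"
    then have "m \<notin> X" "m \<notin> Y" using assms unfolding B_def by auto
    then show "X = Y" using \<open>insert m X = insert m Y\<close> by (metis Diff_insert_absorb)
  qed
  show ?thesis unfolding eq A_def[symmetric] B_def[symmetric]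
    by (simp add: card_Un_disjoint fA fB dj card_image inj)
qed

lemma BB_foldl:
  assumes "distinct xs" "set xs \<subseteq> {1..<n}"
  shows "foldl (\<lambda>acc i. ga_mult n acc (ga_add (ga_basis id) (ga_basis (sadj i)))) (ga_basis id) xs
     = (\<lambda>w. of_nat (card {S. S \<subseteq> set xs \<and> w = wL S xs}))"
  using assms
proof (induction xs rule: rev_induct)
  case Nil
  have "{S. S \<subseteq> set [] \<and> w = wL S []} = (if w = id then {{}} else {})" for w
    by (auto simp: wL_def)
  then show ?case by (auto simp: ga_basis_def fun_eq_iff)
next
  case (snoc m xs)
  have IH: "foldl (\<lambda>acc i. ga_mult n acc (ga_add (ga_basis id) (ga_basis (sadj i)))) (ga_basis id) xs
     = (\<lambda>w. of_nat (card {S. S \<subseteq> set xs \<and> w = wL S xs}))"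
    by (rule snoc.IH) (use snoc.prems in auto)
  have m: "1 \<le> m" "m < n" "m \<notin> set xs" using snoc.prems by auto
  have xs: "set xs \<subseteq> {1..<n}" using snoc.prems by auto
  show ?case
  proof
    fix w
    show "foldl (\<lambda>acc i. ga_mult n acc (ga_add (ga_basis id) (ga_basis (sadj i)))) (ga_basis id) (xs @ [m]) w
      = of_nat (card {S. S \<subseteq> set (xs @ [m]) \<and> w = wL S (xs @ [m])})"
    proof (cases "w permutes {1..n}")
      case True
      then show ?thesis unfolding foldl_append foldl_Cons foldl_Nil IH ga_mult_step[OF m(1,2)] card_step[OF m(3)]
        by simp
    next
      case False
      have "sadj m \<circ> w \<noteq> wL S xs" for S
      proof
        assume "sadj m \<circ> w = wL S xs"
        then have "sadj m \<circ> (sadj m \<circ> w) permutes {1..n}" using wL_permutes[OF xs] sadj_permutes[OF m(1,2)]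
          by (metis permutes_compose)
        then show False using False by (simp add: comp_assoc[symmetric])
      qed
      moreover have "w \<noteq> wL S xs" for S using False wL_permutes[OF xs] by metis
      ultimately show ?thesis unfolding foldl_append foldl_Cons foldl_Nil IH ga_mult_step[OF m(1,2)] card_step[OF m(3)]
        using False by simp
    qed
  qed
qed

lemma BB_card:
  assumes "finite I" "I \<subseteq> {1..<n}"
  shows "BB n I w = of_nat (card {S. S \<subseteq> I \<and> w = wS S})"
proof -
  have "BB n I w = of_nat (card {S. S \<subseteq> I \<and> w = wL S (sorted_list_of_set I)})"
    unfolding BB_def using BB_foldl[of "sorted_list_of_set I" n] assms by simp
  also have "{S. S \<subseteq> I \<and> w = wL S (sorted_list_of_set I)} = {S. S \<subseteq> I \<and> w = wS S}"
    using wL_sorted[OF assms(1)] by auto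
  finally show ?thesis .
qed



lemma lp_step:
  assumes "lattice_path p a B"
  shows "p (Suc b) = p b \<or> p (Suc b) = p b + 1"
  using assms unfolding lattice_path_def by blast

lemma lp_mono:
  assumes "lattice_path p a B" "b \<le> b'"
  shows "p b \<le> p b'"
  using assms(2)
proof (induction b' rule: dec_induct)
  case base then show ?case by simp
next
  case (step m)
  then show ?case using lp_step[OF assms(1), of m] by auto
qed

lemma lp_le:
  assumes "lattice_path p a B"
  shows "p b \<le> a"
proof -
  obtain N where N: "\<forall>b\<ge>N. p b = a" using assms unfolding lattice_path_def by blast
  have "p b \<le> p (max b N)" by (rule lp_mono[OF assms]) simp
  also have "\<dots> = a" using N by simp
  finally show ?thesis .
qed

lemma lp_0: "lattice_path p a B \<Longrightarrow> (p 0, 0) = B"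
  unfolding lattice_path_def by blast

lemma strict_perm_id:
  assumes perm: "\<sigma> permutes {1..n}"
    and mono: "\<And>i j. 1 \<le> i \<Longrightarrow> i < j \<Longrightarrow> j \<le> n \<Longrightarrow> \<sigma> i < \<sigma> j"
    and k: "k \<in> {1..n}"
  shows "\<sigma> k = (k::nat)"
proof -
  have img: "\<And>x. x \<in> {1..n} \<Longrightarrow> \<sigma> x \<in> {1..n}" using permutes_in_image[OF perm] by blast
  have ge: "1 \<le> k \<longrightarrow> k \<le> n \<longrightarrow> k \<le> \<sigma> k" for k
  proof (induction k)
    case 0 then show ?case by simp
  next
    case (Suc k)
    show ?case
    proof (cases "k = 0")
      case True then show ?thesis using img[of 1] by auto
    next
      case False
      then show ?thesis using Suc mono[of k "Suc k"] by auto
    qed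
  qed
  have le: "\<forall>k. 1 \<le> k \<longrightarrow> k \<le> n \<longrightarrow> n - k = t \<longrightarrow> \<sigma> k \<le> k" for t
  proof (induction t)
    case 0 then show ?case using img by fastforce
  next
    case (Suc t)
    show ?case
    proof (intro allI impI)
      fix k assume h: "1 \<le> k" "k \<le> n" "n - k = Suc t"
      then have "\<sigma> (Suc k) \<le> Suc k" using Suc.IH by auto
      moreover have "\<sigma> k < \<sigma> (Suc k)" using mono[of k "Suc k"] h by auto
      ultimately show "\<sigma> k \<le> k" by simp
    qed
  qed
  show ?thesis using ge[of k] le[of "n - k"] k by force
qed

definition par :: "nat \<Rightarrow> (nat \<times> nat) set \<Rightarrow> nat set" where
  "par c C = {i. odd (card {b. c \<le> b \<and> (i, b) \<in> C})}"

definition Dset :: "nat \<Rightarrow> (nat \<times> nat) set \<Rightarrow> nat set" where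
  "Dset c C = {i. (i, c) \<in> C}"

lemma par_nonempty:
  assumes "i \<in> par c C"
  obtains b where "c \<le> b" "(i, b) \<in> C"
proof -
  have o: "odd (card {b. c \<le> b \<and> (i, b) \<in> C})" using assms by (simp add: par_def)
  have "{b. c \<le> b \<and> (i, b) \<in> C} \<noteq> {}"
  proof
    assume "{b. c \<le> b \<and> (i, b) \<in> C} = {}"
    with o show False by simp
  qed
  then show ?thesis using that by blast
qed

lemma par_sub:
  "par c C \<subseteq> fst ` C"
proof
  fix i assume "i \<in> par c C"
  then obtain b where "(i, b) \<in> C" by (rule par_nonempty)
  then show "i \<in> fst ` C" by force
qed

lemma par_step:
  assumes "finite C"
  shows "par c C = (par (Suc c) C - Dset c C) \<union> (Dset c C - par (Suc c) C)"
proof (rule set_eqI)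
  fix i
  define X where "X = {b. Suc c \<le> b \<and> (i, b) \<in> C}"
  have fX: "finite X" unfolding X_def
    by (rule finite_subset[of _ "snd ` C"]) (use assms in force)+
  have cX: "c \<notin> X" by (simp add: X_def)
  show "i \<in> par c C \<longleftrightarrow> i \<in> (par (Suc c) C - Dset c C) \<union> (Dset c C - par (Suc c) C)"
  proof (cases "(i, c) \<in> C")
    case True
    have e: "{b. c \<le> b \<and> (i, b) \<in> C} = insert c X" using True by (auto simp: X_def)
    have "card (insert c X) = Suc (card X)" using fX cX by simp
    moreover have "i \<in> par c C \<longleftrightarrow> odd (card (insert c X))" by (simp add: par_def e)
    moreover have "i \<in> par (Suc c) C \<longleftrightarrow> odd (card X)" by (simp add: par_def X_def)
    ultimately show ?thesis using True by (simp add: Dset_def)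
  next
    case False
    have e: "{b. c \<le> b \<and> (i, b) \<in> C} = X" using False by (auto simp: X_def Suc_le_eq le_less)
    have "i \<in> par c C \<longleftrightarrow> odd (card X)" by (simp add: par_def e)
    moreover have "i \<in> par (Suc c) C \<longleftrightarrow> odd (card X)" by (simp add: par_def X_def)
    ultimately show ?thesis using False by (simp add: Dset_def)
  qed
qed

lemma par_high:
  assumes "\<forall>x\<in>C. snd x < c"
  shows "par c C = {}"
proof -
  have e: "{b. c \<le> b \<and> (i, b) \<in> C} = {}" for i using assms by force
  show ?thesis unfolding par_def e by simp
qed

lemma par_cong:
  assumes "\<forall>i b. c \<le> b \<longrightarrow> ((i, b) \<in> C \<longleftrightarrow> (i, b) \<in> C')"
  shows "par c C = par c C'"
proof -
  have "{b. c \<le> b \<and> (i, b) \<in> C} = {b. c \<le> b \<and> (i, b) \<in> C'}" for i using assms by auto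
  then show ?thesis unfolding par_def by simp
qed

locale cfg =
  fixes lam mu :: "nat \<Rightarrow> nat" and n :: nat and P :: "nat \<Rightarrow> lpath" and \<sigma> :: "nat \<Rightarrow> nat"
  assumes plam: "is_partition lam" and pmu: "is_partition mu"
    and len: "length_le lam n" and no32: "\<not> has_3x2_block lam mu"
    and fam: "path_family lam mu n P \<sigma>" and nc: "noncrossing_family n P"
begin

definition A :: "nat \<Rightarrow> int" where "A k = Ax lam n k"
definition Bx :: "nat \<Rightarrow> int" where "Bx k = int (mu k) + int n - int k"

lemma Pk: "k \<in> {1..n} \<Longrightarrow> lattice_path (P k) (A k) (Bv mu n (\<sigma> k))"
  using fam unfolding path_family_def A_def by blast

lemma P_out: "k \<notin> {1..n} \<Longrightarrow> P k = (\<lambda>_. 0)"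
  using fam unfolding path_family_def by blast

lemma sigma_perm: "\<sigma> permutes {1..n}"
  using fam unfolding path_family_def by blast

lemma ex_Ntop: "\<exists>N. \<forall>k\<in>{1..n}. \<forall>b\<ge>N. P k b = A k"
proof -
  have "\<forall>k\<in>{1..n}. \<exists>N. \<forall>b\<ge>N. P k b = A k" using Pk unfolding lattice_path_def by blast
  then obtain f where f: "\<forall>k\<in>{1..n}. \<forall>b\<ge>f k. P k b = A k" by metis
  have "\<forall>k\<in>{1..n}. f k \<le> (\<Sum>k\<in>{1..n}. f k)" by (auto intro: member_le_sum)
  then show ?thesis using f by (metis order_trans)
qed

definition Ntop where "Ntop = (SOME N. \<forall>k\<in>{1..n}. \<forall>b\<ge>N. P k b = A k)"

lemma Ntop: "k \<in> {1..n} \<Longrightarrow> Ntop \<le> b \<Longrightarrow> P k b = A k"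
  using someI_ex[OF ex_Ntop] unfolding Ntop_def by blast

lemma lam_mono: "1 \<le> i \<Longrightarrow> i \<le> j \<Longrightarrow> lam j \<le> lam i"
  using plam unfolding is_partition_def by blast

lemma mu_mono: "1 \<le> i \<Longrightarrow> i \<le> j \<Longrightarrow> mu j \<le> mu i"
  using pmu unfolding is_partition_def by blast

lemma A_strict: "1 \<le> i \<Longrightarrow> i < j \<Longrightarrow> A j < A i"
  using lam_mono[of i j] unfolding A_def Ax_def by simp

lemma Bx_strict: "1 \<le> i \<Longrightarrow> i < j \<Longrightarrow> Bx j < Bx i"
  using mu_mono[of i j] unfolding Bx_def by simp

lemma P_order:
  assumes "i \<in> {1..n}" "j \<in> {1..n}" "i < j"
  shows "P j b \<le> P i b"
proof (rule ccontr)
  assume "\<not> P j b \<le> P i b"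
  then have lt: "P i b < P j b" by simp
  have "P j Ntop < P i Ntop" using Ntop[OF assms(1)] Ntop[OF assms(2)] A_strict[of i j] assms by simp
  moreover have "noncrossing_paths (P i) (P j)" using nc assms unfolding noncrossing_family_def by blast
  ultimately show False using lt unfolding noncrossing_paths_def vertices_def by blast
qed

lemma sigma_id: "k \<in> {1..n} \<Longrightarrow> \<sigma> k = k"
proof (rule strict_perm_id[OF sigma_perm])
  fix i j assume h: "1 \<le> i" "i < j" "j \<le> n"
  have iin: "i \<in> {1..n}" and jin: "j \<in> {1..n}" using h by auto
  have si: "\<sigma> i \<in> {1..n}" "\<sigma> j \<in> {1..n}" using iin jin permutes_in_image[OF sigma_perm] by blast+
  have ne: "\<sigma> i \<noteq> \<sigma> j" using h permutes_inj[OF sigma_perm] by (metis inj_eq less_irrefl)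
  have "P i 0 = Bx (\<sigma> i)" "P j 0 = Bx (\<sigma> j)"
    using lp_0[OF Pk[OF iin]] lp_0[OF Pk[OF jin]] unfolding Bv_def Bx_def by auto
  moreover have "P j 0 \<le> P i 0" using P_order[OF iin jin h(2)] .
  ultimately have "Bx (\<sigma> j) \<le> Bx (\<sigma> i)" by simp
  then show "\<sigma> i < \<sigma> j" using Bx_strict[of "\<sigma> j" "\<sigma> i"] si ne by force
qed

lemma P0: "k \<in> {1..n} \<Longrightarrow> P k 0 = Bx k"
  using lp_0[OF Pk] sigma_id unfolding Bv_def Bx_def by auto

lemma P_step: "k \<in> {1..n} \<Longrightarrow> P k (Suc b) = P k b \<or> P k (Suc b) = P k b + 1"
  using lp_step[OF Pk] .

lemma P_mono: "k \<in> {1..n} \<Longrightarrow> b \<le> b' \<Longrightarrow> P k b \<le> P k b'"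
  using lp_mono[OF Pk] .

lemma P_ge: "k \<in> {1..n} \<Longrightarrow> Bx k \<le> P k b"
  using P_mono[of k 0 b] P0 by simp

lemma P_le: "k \<in> {1..n} \<Longrightarrow> P k b \<le> A k"
  using lp_le[OF Pk] .

lemma G:
  assumes "1 \<le> i" "i + 2 \<le> k" "k \<le> n"
  shows "P k h' < P i h"
proof -
  have "lam k \<le> lam (i + 2)" using lam_mono[of "i+2" k] assms by simp
  moreover have "lam (i + 2) < mu i + 2" using no32 assms unfolding has_3x2_block_def by force
  ultimately have "A k < Bx i" unfolding A_def Ax_def Bx_def using assms by simp
  moreover have "P k h' \<le> A k" using P_le assms by simp
  moreover have "Bx i \<le> P i h" using P_ge assms by simp
  ultimately show ?thesis by simp
qed

definition cnt :: "nat \<Rightarrow> nat \<Rightarrow> bool" where "cnt i b \<longleftrightarrow> P i b = P (Suc i) b"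
definition dv :: "nat \<Rightarrow> nat \<Rightarrow> bool" where "dv i b \<longleftrightarrow> cnt i (Suc b) \<and> \<not> cnt i b"

lemma notriple: "1 \<le> i \<Longrightarrow> i + 2 \<le> n \<Longrightarrow> cnt i b \<Longrightarrow> cnt (Suc i) b \<Longrightarrow> False"
  using G[of i "i+2" b b] unfolding cnt_def by simp

lemma pairorder:
  assumes "1 \<le> i" "i + 2 \<le> n" "cnt i h" "cnt (Suc i) h'"
  shows "h' < h"
proof (rule ccontr)
  assume "\<not> h' < h"
  then have "P (Suc i) h \<le> P (Suc i) h'" using P_mono[of "Suc i" h h'] assms by simp
  then have "P i h \<le> P (i + 2) h'" using assms unfolding cnt_def by simp
  moreover have "P (i + 2) h' < P i h" using G[of i "i+2"] assms by simp
  ultimately show False by simp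
qed

lemma cnt_pos: "1 \<le> i \<Longrightarrow> i < n \<Longrightarrow> cnt i b \<Longrightarrow> 0 < b"
  using P0[of i] P0[of "Suc i"] Bx_strict[of i "Suc i"] unfolding cnt_def
  by (cases b) auto

lemma cnt_top: "1 \<le> i \<Longrightarrow> i < n \<Longrightarrow> cnt i b \<Longrightarrow> b < Ntop"
  using Ntop[of i b] Ntop[of "Suc i" b] A_strict[of i "Suc i"] unfolding cnt_def
  by (cases "Ntop \<le> b") auto

lemma adj:
  assumes "j \<in> {1..n}" "j' \<in> {1..n}" "P j' b = P j b"
  shows "j' = j \<or> (j' = Suc j \<and> cnt j b) \<or> (Suc j' = j \<and> cnt j' b)"
proof -
  have "\<not> j + 2 \<le> j'" using G[of j j' b b] assms by auto
  moreover have "\<not> j' + 2 \<le> j" using G[of j' j b b] assms by auto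
  ultimately consider "j' = j" | "j' = Suc j" | "Suc j' = j" by linarith
  then show ?thesis using assms unfolding cnt_def by cases auto
qed

definition Rset :: "(nat \<times> nat) set" where "Rset = {(i, b). 1 \<le> i \<and> i < n \<and> dv i b}"

lemma Rset_sub: "Rset \<subseteq> {1..<n} \<times> {..<Ntop}"
proof
  fix x assume "x \<in> Rset"
  then obtain i b where x: "x = (i, b)" "1 \<le> i" "i < n" "dv i b" unfolding Rset_def by blast
  then have "Suc b < Ntop" using cnt_top[of i "Suc b"] unfolding dv_def by blast
  then show "x \<in> {1..<n} \<times> {..<Ntop}" using x by auto
qed

lemma finite_Rset: "finite Rset"
  using Rset_sub by (rule finite_subset) simp

definition I0 :: "nat set" where "I0 = fst ` Rset"

lemma I0_sub: "I0 \<subseteq> {1..<n}"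
proof
  fix i assume "i \<in> I0"
  then obtain x where "x \<in> Rset" "i = fst x" unfolding I0_def by blast
  then show "i \<in> {1..<n}" using Rset_sub by (cases x) auto
qed

lemma finite_I0: "finite I0" unfolding I0_def using finite_Rset by simp

lemma par_I0: "C \<subseteq> Rset \<Longrightarrow> par c C \<subseteq> I0"
  unfolding I0_def by (rule order_trans[OF par_sub image_mono])

lemma finite_par: "C \<subseteq> Rset \<Longrightarrow> finite (par c C)"
  by (rule finite_subset[OF par_I0 finite_I0])

lemma pi_perm: "C \<subseteq> Rset \<Longrightarrow> wS (par c C) permutes {1..n}"
proof -
  assume C: "C \<subseteq> Rset"
  have "par c C \<subseteq> {1..<n}" using par_I0[OF C] I0_sub by (rule subset_trans)
  then show ?thesis by (rule wS_permutes[OF finite_par[OF C]])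
qed

lemma pi_in: "C \<subseteq> Rset \<Longrightarrow> k \<in> {1..n} \<Longrightarrow> wS (par c C) k \<in> {1..n}"
  using permutes_in_image[OF pi_perm] by blast

lemma pi_step:
  assumes C: "C \<subseteq> Rset"
  shows "wS (par c C) = swp (Dset c C) \<circ> wS (par (Suc c) C)"
proof -
  have fC: "finite C" using C finite_Rset finite_subset by blast
  have fD: "finite (Dset c C)"
    by (rule finite_subset[of _ "fst ` C"]) (use fC in \<open>force simp: Dset_def\<close>)+
  have z: "0 \<notin> Dset c C" using C unfolding Dset_def Rset_def by auto
  have sep: "\<forall>x\<in>Dset c C. Suc x \<notin> Dset c C"
  proof (intro ballI notI)
    fix x assume "x \<in> Dset c C" "Suc x \<in> Dset c C"
    then have "1 \<le> x" "Suc x < n" "dv x c" "dv (Suc x) c" using C unfolding Dset_def Rset_def by auto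
    then show False using notriple[of x "Suc c"] unfolding dv_def by auto
  qed
  have up: "\<forall>x\<in>Dset c C. Suc x \<notin> par (Suc c) C"
  proof (intro ballI notI)
    fix x assume x: "x \<in> Dset c C" "Suc x \<in> par (Suc c) C"
    obtain b where b: "Suc c \<le> b" "(Suc x, b) \<in> C" using x(2) by (rule par_nonempty)
    have "1 \<le> x" "Suc x < n" "dv x c" "dv (Suc x) b" using C x b unfolding Dset_def Rset_def by auto
    then have "Suc b < Suc c" using pairorder[of x "Suc c" "Suc b"] unfolding dv_def by auto
    then show False using b by simp
  qed
  show ?thesis
    using swp_wS[OF fD finite_par[OF C] z sep up] par_step[OF fC, of c] by simp
qed

lemma star:
  assumes C: "C \<subseteq> Rset" and k: "k \<in> {1..n}"
  shows "P (wS (par c C) k) (Suc c) = P (wS (par (Suc c) C) k) (Suc c)"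
proof -
  define j where "j = wS (par (Suc c) C) k"
  have jin: "j \<in> {1..n}" using pi_in[OF C k] unfolding j_def .
  have e: "wS (par c C) k = swp (Dset c C) j" using pi_step[OF C, of c] unfolding j_def by simp
  show ?thesis unfolding e j_def[symmetric]
  proof (cases "j \<in> Dset c C")
    case True
    then have "dv j c" using C unfolding Dset_def Rset_def by auto
    then have "P j (Suc c) = P (Suc j) (Suc c)" unfolding dv_def cnt_def by blast
    moreover have "swp (Dset c C) j = Suc j" using True unfolding swp_def by simp
    ultimately show "P (swp (Dset c C) j) (Suc c) = P j (Suc c)" by simp
  next
    case False
    show "P (swp (Dset c C) j) (Suc c) = P j (Suc c)"
    proof (cases "0 < j \<and> j - 1 \<in> Dset c C")
      case True
      then have "dv (j - 1) c" using C unfolding Dset_def Rset_def by auto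
      then have "P (j - 1) (Suc c) = P (Suc (j - 1)) (Suc c)" unfolding dv_def cnt_def by blast
      moreover have "Suc (j - 1) = j" using True by simp
      moreover have "swp (Dset c C) j = j - 1" using True False unfolding swp_def by simp
      ultimately show ?thesis by simp
    next
      case F2: False
      then have "swp (Dset c C) j = j" using False unfolding swp_def by auto
      then show ?thesis by simp
    qed
  qed
qed

definition QC :: "(nat \<times> nat) set \<Rightarrow> nat \<Rightarrow> lpath" where
  "QC C k b = (if k \<in> {1..n} then P (wS (par b C) k) b else 0)"

lemma QC_Suc:
  assumes "C \<subseteq> Rset" "k \<in> {1..n}"
  shows "QC C k (Suc b) = P (wS (par b C) k) (Suc b)"
  unfolding QC_def using star[OF assms, of b] assms by simp

lemma par_top: "C \<subseteq> Rset \<Longrightarrow> Ntop \<le> c \<Longrightarrow> par c C = {}"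
  by (rule par_high) (use Rset_sub in force)

lemma QC_family:
  assumes C: "C \<subseteq> Rset"
  shows "path_family lam mu n (QC C) (wS (par 0 C))"
  unfolding path_family_def
proof (intro conjI ballI allI impI)
  show "wS (par 0 C) permutes {1..n}" by (rule pi_perm[OF C])
next
  fix i assume i: "i \<in> {1..n}"
  define j0 where "j0 = wS (par 0 C) i"
  have j0: "j0 \<in> {1..n}" using pi_in[OF C i] unfolding j0_def .
  show "lattice_path (QC C i) (Ax lam n i) (Bv mu n (wS (par 0 C) i))"
    unfolding lattice_path_def
  proof (intro conjI allI)
    show "(QC C i 0, 0) = Bv mu n (wS (par 0 C) i)"
      using P0[OF j0] i unfolding QC_def j0_def[symmetric] Bv_def Bx_def by simp
  next
    fix b
    define j where "j = wS (par b C) i"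
    have j: "j \<in> {1..n}" using pi_in[OF C i] unfolding j_def .
    show "QC C i (Suc b) = QC C i b \<or> QC C i (Suc b) = QC C i b + 1"
      using QC_Suc[OF C i, of b] P_step[OF j, of b] i unfolding QC_def j_def by simp
  next
    have "\<forall>b\<ge>Ntop. QC C i b = Ax lam n i"
      using par_top[OF C] Ntop[OF i] i unfolding QC_def A_def by simp
    then show "\<exists>N. \<forall>b\<ge>N. QC C i b = Ax lam n i" by blast
  qed
next
  fix i assume ni: "i \<notin> {1..n}"
  show "QC C i = (\<lambda>_. 0)" by (rule ext) (use ni in \<open>auto simp: QC_def\<close>)
qed

lemma QC_edge:
  assumes C: "C \<subseteq> Rset" and k: "k \<in> {1..n}"
  shows "edge_at (QC C k) b = edge_at (P (wS (par b C) k)) b"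
  unfolding edge_at_def using QC_Suc[OF C k] k unfolding QC_def by simp

lemma QC_covers:
  assumes C: "C \<subseteq> Rset"
  shows "covers n (QC C) (edge_mult n P)"
  unfolding covers_def edge_mult_def
proof
  fix e
  define f where "f = (\<lambda>(i::nat, b::nat). (wS (par b C) i, b))"
  let ?Q = "{(i, b). i \<in> {1..n} \<and> edge_at (QC C i) b = e}"
  let ?P = "{(i, b). i \<in> {1..n} \<and> edge_at (P i) b = e}"
  have inj: "inj_on f ?Q"
  proof (rule inj_onI)
    fix x y assume "x \<in> ?Q" "y \<in> ?Q" "f x = f y"
    then show "x = y" using permutes_inj[OF pi_perm[OF C]] unfolding f_def
      by (auto simp: inj_eq split: prod.splits)
  qed
  have img: "f ` ?Q = ?P"
  proof (rule set_eqI, rule iffI)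
    fix y assume "y \<in> f ` ?Q"
    then obtain i b where "i \<in> {1..n}" "edge_at (QC C i) b = e" "y = (wS (par b C) i, b)"
      unfolding f_def by auto
    then show "y \<in> ?P" using QC_edge[OF C] pi_in[OF C] by auto
  next
    fix y assume "y \<in> ?P"
    then obtain j b where jb: "y = (j, b)" "j \<in> {1..n}" "edge_at (P j) b = e" by auto
    define i where "i = inv (wS (par b C)) j"
    have i: "i \<in> {1..n}" "wS (par b C) i = j"
      using permutes_in_image[OF permutes_inv[OF pi_perm[OF C, of b]]] jb(2)
        permutes_inverses(1)[OF pi_perm[OF C, of b]] unfolding i_def by blast+
    have "(i, b) \<in> ?Q" using i jb QC_edge[OF C i(1)] by simp
    then show "y \<in> f ` ?Q" using i jb unfolding f_def by force
  qed
  show "card ?P = card ?Q" using card_image[OF inj] img by simp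
qed

end


lemma card_edge_level:
  assumes "snd (snd e) = int b"
  shows "card {(i, b'). i \<in> {1..n} \<and> edge_at (R i) b' = e} = card {k \<in> {1..n}. edge_at (R k) b = e}"
proof -
  have "{(i, b'). i \<in> {1..n} \<and> edge_at (R i) b' = e} = (\<lambda>i. (i, b)) ` {k \<in> {1..n}. edge_at (R k) b = e}"
    using assms unfolding edge_at_def by auto
  moreover have "card ((\<lambda>i. (i, b)) ` {k \<in> {1..n}. edge_at (R k) b = e}) = card {k \<in> {1..n}. edge_at (R k) b = e}"
    by (rule card_image) (auto intro: inj_onI)
  ultimately show ?thesis by simp
qed

lemma edge_eq: "edge_at p b = edge_at q b \<longleftrightarrow> p (Suc b) = q (Suc b) \<and> p b = q b"
  by (simp add: edge_at_def)

lemma lp_family_top: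
  assumes "finite K" "\<forall>k\<in>K. lattice_path (R k) (a k) (B k)"
  shows "\<exists>N. \<forall>k\<in>K. \<forall>b\<ge>N. R k b = a k"
proof -
  have "\<forall>k\<in>K. \<exists>N. \<forall>b\<ge>N. R k b = a k" using assms(2) unfolding lattice_path_def by blast
  then obtain f where f: "\<forall>k\<in>K. \<forall>b\<ge>f k. R k b = a k" by metis
  have "\<forall>k\<in>K. f k \<le> (\<Sum>k\<in>K. f k)" using assms(1) by (auto intro: member_le_sum)
  then show ?thesis using f by (metis order_trans)
qed

context cfg
begin

lemma Q_count:
  assumes Qc: "covers n Q (edge_mult n P)" and e: "snd (snd e) = int b"
  shows "card {k\<in>{1..n}. edge_at (Q k) b = e} = card {k\<in>{1..n}. edge_at (P k) b = e}"
proof -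
  have "edge_mult n P e = edge_mult n Q e" using Qc unfolding covers_def by blast
  then show ?thesis unfolding edge_mult_def card_edge_level[OF e] by simp
qed

lemma Q_ex:
  assumes Qc: "covers n Q (edge_mult n P)" and k: "k \<in> {1..n}"
  shows "\<exists>j'\<in>{1..n}. P j' (Suc b) = Q k (Suc b) \<and> P j' b = Q k b"
proof -
  define e where "e = edge_at (Q k) b"
  define SQ where "SQ = {k\<in>{1..n}. edge_at (Q k) b = e}"
  define SP where "SP = {k\<in>{1..n}. edge_at (P k) b = e}"
  have e: "snd (snd e) = int b" unfolding e_def edge_at_def by simp
  have "k \<in> SQ" using k unfolding e_def SQ_def by simp
  moreover have "finite SQ" unfolding SQ_def by (rule finite_subset[of _ "{1..n}"]) auto
  ultimately have "0 < card SQ" by (auto simp: card_gt_0_iff)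
  moreover have "card SQ = card SP" unfolding SQ_def SP_def by (rule Q_count[OF Qc e])
  ultimately have "0 < card SP" by simp
  then have "SP \<noteq> {}" by (auto simp: card_gt_0_iff)
  then obtain j' where "j' \<in> {1..n}" "edge_at (P j') b = e" unfolding SP_def by blast
  then show ?thesis unfolding e_def edge_eq by blast
qed

lemma Q_uniq:
  assumes Qc: "covers n Q (edge_mult n P)" and k: "k1 \<in> {1..n}" "k2 \<in> {1..n}" "k1 \<noteq> k2"
    and eq: "Q k1 (Suc b) = Q k2 (Suc b)" "Q k1 b = Q k2 b"
    and only: "\<And>j''. j'' \<in> {1..n} \<Longrightarrow> P j'' (Suc b) = Q k1 (Suc b) \<Longrightarrow> P j'' b = Q k1 b \<Longrightarrow> j'' = j0"
  shows False
proof -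
  define e where "e = edge_at (Q k1) b"
  have e: "snd (snd e) = int b" unfolding e_def edge_at_def by simp
  have "{k1, k2} \<subseteq> {k\<in>{1..n}. edge_at (Q k) b = e}" using k eq unfolding e_def edge_eq by auto
  moreover have "finite {k\<in>{1..n}. edge_at (Q k) b = e}" by (rule finite_subset[of _ "{1..n}"]) auto
  ultimately have "card {k1, k2} \<le> card {k\<in>{1..n}. edge_at (Q k) b = e}" by (simp add: card_mono)
  then have 2: "2 \<le> card {k\<in>{1..n}. edge_at (P k) b = e}" using Q_count[OF Qc e] k(3) by simp
  have "{k\<in>{1..n}. edge_at (P k) b = e} \<subseteq> {j0}" using only unfolding e_def edge_eq by auto
  then have "card {k\<in>{1..n}. edge_at (P k) b = e} \<le> card {j0}" by (intro card_mono) simp_all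
  then have "card {k\<in>{1..n}. edge_at (P k) b = e} \<le> 1" by simp
  then show False using 2 by simp
qed

lemma adj2:
  assumes "j0 \<in> {1..n}" "j \<in> {1..n}" "P j (Suc b) = P j0 (Suc b)" "P j b = P j0 b"
  shows "j = j0 \<or> (j = Suc j0 \<and> cnt j0 (Suc b) \<and> cnt j0 b) \<or> (Suc j = j0 \<and> cnt j (Suc b) \<and> cnt j b)"
  using adj[OF assms(1,2,3)] assms(4) unfolding cnt_def by auto

lemma inv_in:
  assumes "\<pi> permutes {1..n}" "i \<in> {1..n}"
  shows "inv \<pi> i \<in> {1..n}" "\<pi> (inv \<pi> i) = i"
  using permutes_in_image[OF permutes_inv[OF assms(1)]] assms(2)
    permutes_inverses(1)[OF assms(1)] by blast+

lemma local_step: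
  assumes Qf: "path_family lam mu n Q \<tau>" and Qc: "covers n Q (edge_mult n P)"
    and pi: "\<pi> permutes {1..n}" and hyp: "\<forall>k\<in>{1..n}. Q k (Suc b) = P (\<pi> k) (Suc b)"
    and Ddef: "D = {i. 1 \<le> i \<and> i < n \<and> dv i b \<and> (\<exists>k\<in>{1..n}. \<pi> k = i \<and> Q k b = P (Suc i) b)}"
    and k: "k \<in> {1..n}"
  shows "Q k b = P (swp D (\<pi> k)) b"
proof -
  define j where "j = \<pi> k"
  have j: "j \<in> {1..n}" using permutes_in_image[OF pi] k j_def by blast
  have injpi: "\<And>x y. \<pi> x = \<pi> y \<Longrightarrow> x = y" using permutes_inj[OF pi] by (metis inj_eq)
  have Qk1: "Q k (Suc b) = P j (Suc b)" using hyp k j_def by simp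
  obtain j' where j': "j' \<in> {1..n}" "P j' (Suc b) = Q k (Suc b)" "P j' b = Q k b"
    using Q_ex[OF Qc k] by blast
  have j'adj: "j' = j \<or> (j' = Suc j \<and> cnt j (Suc b)) \<or> (Suc j' = j \<and> cnt j' (Suc b))"
    using adj[OF j j'(1)] j'(2) Qk1 by simp
  show ?thesis
  proof (cases "j \<in> D")
    case True
    then obtain k0 where k0: "k0 \<in> {1..n}" "\<pi> k0 = j" "Q k0 b = P (Suc j) b" unfolding Ddef by blast
    have "k0 = k" using injpi k0(2) j_def by simp
    moreover have "swp D j = Suc j" using True by (simp add: swp_def)
    ultimately show ?thesis using k0 j_def by simp
  next
    case jD: False
    show ?thesis
    proof (cases "0 < j \<and> j - 1 \<in> D")
      case True
      define i where "i = j - 1"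
      have iD: "i \<in> D" using True i_def by simp
      have ij: "Suc i = j" using True i_def by simp
      have i1: "1 \<le> i" "i < n" "dv i b" using iD unfolding Ddef by auto
      have sw: "swp D j = i" using True jD unfolding swp_def i_def by simp
      obtain k0 where k0: "k0 \<in> {1..n}" "\<pi> k0 = i" "Q k0 b = P j b" using iD ij unfolding Ddef by auto
      have k0k: "k \<noteq> k0" using k0(2) j_def ij by auto
      have ci: "cnt i (Suc b)" "\<not> cnt i b" using i1 unfolding dv_def by auto
      consider "j' = j" | "j' = Suc j \<and> cnt j (Suc b)" | "Suc j' = j \<and> cnt j' (Suc b)" using j'adj by blast
      then have "Q k b = P i b"
      proof cases
        case 1
        have Qk0: "Q k0 (Suc b) = P j (Suc b)" using hyp k0 ci ij unfolding cnt_def by auto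
        have False
        proof (rule Q_uniq[OF Qc k k0(1) k0k])
          show "Q k (Suc b) = Q k0 (Suc b)" using Qk1 Qk0 by simp
          show "Q k b = Q k0 b" using j' 1 k0 by simp
        next
          fix j'' assume h: "j'' \<in> {1..n}" "P j'' (Suc b) = Q k (Suc b)" "P j'' b = Q k b"
          have "P j'' (Suc b) = P j (Suc b)" "P j'' b = P j b" using h Qk1 j' 1 by auto
          then have "j'' = j \<or> (j'' = Suc j \<and> cnt j (Suc b) \<and> cnt j b) \<or> (Suc j'' = j \<and> cnt j'' (Suc b) \<and> cnt j'' b)"
            using adj2[OF j h(1)] by simp
          moreover have "\<not> (j'' = Suc j \<and> cnt j (Suc b))"
          proof
            assume "j'' = Suc j \<and> cnt j (Suc b)"
            then show False using notriple[of i "Suc b"] ci i1 ij h(1) by auto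
          qed
          moreover have "\<not> (Suc j'' = j \<and> cnt j'' b)" using ci ij by auto
          ultimately show "j'' = j" by blast
        qed
        then show ?thesis ..
      next
        case 2
        then have False using notriple[of i "Suc b"] ci i1 ij j'(1) by auto
        then show ?thesis ..
      next
        case 3
        then have "j' = i" using ij by simp
        then show ?thesis using j' by simp
      qed
      then show ?thesis using sw j_def by simp
    next
      case False
      have sw: "swp D j = j" using False jD unfolding swp_def by auto
      consider "j' = j" | "j' = Suc j \<and> cnt j (Suc b)" | "Suc j' = j \<and> cnt j' (Suc b)" using j'adj by blast
      then have "Q k b = P j b"
      proof cases
        case 1 then show ?thesis using j' by simp
      next
        case 2
        have x: "Q k b = P (Suc j) b" using 2 j' by simp
        show ?thesis
        proof (cases "cnt j b")
          case True then show ?thesis using x unfolding cnt_def by simp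
        next
          case ncj: False
          have "1 \<le> j" "j < n" using j 2 j'(1) by auto
          moreover have "dv j b" using 2 ncj unfolding dv_def by simp
          moreover have "\<exists>k\<in>{1..n}. \<pi> k = j \<and> Q k b = P (Suc j) b" using k j_def x by blast
          ultimately have "j \<in> D" unfolding Ddef by blast
          then show ?thesis using jD by simp
        qed
      next
        case 3
        define i where "i = j'"
        have x: "Q k b = P i b" using j' i_def by simp
        have ij: "Suc i = j" "1 \<le> i" "i < n" using 3 i_def j'(1) j by auto
        have ci: "cnt i (Suc b)" using 3 i_def by simp
        show ?thesis
        proof (cases "cnt i b")
          case True then show ?thesis using x ij unfolding cnt_def by auto
        next
          case ncb: False
          have iD: "i \<notin> D" using False ij by auto
          define k0 where "k0 = inv \<pi> i"
          have k0: "k0 \<in> {1..n}" "\<pi> k0 = i" using inv_in[OF pi, of i] ij unfolding k0_def by auto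
          have k0k: "k \<noteq> k0" using k0(2) j_def ij by auto
          have Qk0s: "Q k0 (Suc b) = P i (Suc b)" using hyp k0 by simp
          obtain j2 where j2: "j2 \<in> {1..n}" "P j2 (Suc b) = Q k0 (Suc b)" "P j2 b = Q k0 b"
            using Q_ex[OF Qc k0(1)] by blast
          have i_in: "i \<in> {1..n}" using ij by simp
          have "j2 = i \<or> (j2 = Suc i \<and> cnt i (Suc b)) \<or> (Suc j2 = i \<and> cnt j2 (Suc b))"
            using adj[OF i_in j2(1)] j2(2) Qk0s by simp
          then have Qk0: "Q k0 b = P i b"
          proof (elim disjE)
            assume "j2 = i" then show ?thesis using j2 by simp
          next
            assume a: "j2 = Suc i \<and> cnt i (Suc b)"
            have "dv i b" using ci ncb unfolding dv_def by simp
            moreover have "\<exists>k\<in>{1..n}. \<pi> k = i \<and> Q k b = P (Suc i) b" using k0 j2 a by auto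
            ultimately have "i \<in> D" using ij unfolding Ddef by blast
            then show ?thesis using iD by simp
          next
            assume a: "Suc j2 = i \<and> cnt j2 (Suc b)"
            then have False using notriple[of j2 "Suc b"] ci ij j2(1) by auto
            then show ?thesis ..
          qed
          have False
          proof (rule Q_uniq[OF Qc k k0(1) k0k])
            show "Q k (Suc b) = Q k0 (Suc b)" using Qk1 Qk0s ci ij unfolding cnt_def by simp
            show "Q k b = Q k0 b" using x Qk0 by simp
          next
            fix j'' assume h: "j'' \<in> {1..n}" "P j'' (Suc b) = Q k (Suc b)" "P j'' b = Q k b"
            have "P j'' (Suc b) = P i (Suc b)" "P j'' b = P i b" using h Qk1 x ci ij unfolding cnt_def by auto
            then have "j'' = i \<or> (j'' = Suc i \<and> cnt i (Suc b) \<and> cnt i b) \<or> (Suc j'' = i \<and> cnt j'' (Suc b) \<and> cnt j'' b)"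
              using adj2[OF i_in h(1)] by simp
            moreover have "\<not> (Suc j'' = i \<and> cnt j'' (Suc b))"
            proof
              assume "Suc j'' = i \<and> cnt j'' (Suc b)"
              then show False using notriple[of j'' "Suc b"] ci ij h(1) by auto
            qed
            ultimately show "j'' = i" using ncb by blast
          qed
          then show ?thesis ..
        qed
      qed
      then show ?thesis using sw j_def by simp
    qed
  qed
qed

lemma QC_surj:
  assumes Qf: "path_family lam mu n Q \<tau>" and Qc: "covers n Q (edge_mult n P)"
  shows "\<exists>C. C \<subseteq> Rset \<and> Q = QC C"
proof -
  have Qk: "\<forall>k\<in>{1..n}. lattice_path (Q k) (A k) (Bv mu n (\<tau> k))"
    using Qf unfolding path_family_def A_def by blast
  have Qout: "\<And>k. k \<notin> {1..n} \<Longrightarrow> Q k = (\<lambda>_. 0)" using Qf unfolding path_family_def by blast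
  obtain NQ where NQ: "\<forall>k\<in>{1..n}. \<forall>b\<ge>NQ. Q k b = A k"
    using lp_family_top[OF _ Qk] by blast
  define M where "M = max NQ Ntop"
  have claim: "\<exists>C. C \<subseteq> Rset \<and> (\<forall>x\<in>C. b \<le> snd x) \<and> (\<forall>k\<in>{1..n}. \<forall>c\<ge>b. Q k c = P (wS (par c C) k) c)"
    if "b \<le> M" for b
    using that
  proof (induction b rule: inc_induct)
    case base
    have p0: "par c {} = {}" for c by (rule par_high) simp
    have "\<forall>k\<in>{1..n}. \<forall>c\<ge>M. Q k c = P (wS (par c {}) k) c"
      using NQ Ntop unfolding p0 M_def by simp
    then show ?case by blast
  next
    case (step b)
    then obtain C where C: "C \<subseteq> Rset" "\<forall>x\<in>C. Suc b \<le> snd x"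
      "\<forall>k\<in>{1..n}. \<forall>c\<ge>Suc b. Q k c = P (wS (par c C) k) c" by blast
    define \<pi> where "\<pi> = wS (par (Suc b) C)"
    define D where "D = {i. 1 \<le> i \<and> i < n \<and> dv i b \<and> (\<exists>k\<in>{1..n}. \<pi> k = i \<and> Q k b = P (Suc i) b)}"
    define C' where "C' = C \<union> (\<lambda>i. (i, b)) ` D"
    have C'R: "C' \<subseteq> Rset" using C(1) unfolding C'_def D_def Rset_def by auto
    have C'b: "\<forall>x\<in>C'. b \<le> snd x" using C(2) unfolding C'_def by auto
    have parc: "par c C' = par c C" if "Suc b \<le> c" for c
      by (rule par_cong) (use that in \<open>auto simp: C'_def\<close>)
    have DC: "Dset b C' = D" using C(2) unfolding Dset_def C'_def by force
    have pib: "wS (par b C') = swp D \<circ> \<pi>"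
      using pi_step[OF C'R, of b] unfolding DC parc[OF le_refl] \<pi>_def .
    have pi: "\<pi> permutes {1..n}" unfolding \<pi>_def by (rule pi_perm[OF C(1)])
    have hyp: "\<forall>k\<in>{1..n}. Q k (Suc b) = P (\<pi> k) (Suc b)" using C(3) unfolding \<pi>_def by simp
    have "\<forall>k\<in>{1..n}. \<forall>c\<ge>b. Q k c = P (wS (par c C') k) c"
    proof (intro ballI allI impI)
      fix k c assume k: "k \<in> {1..n}" and c: "b \<le> c"
      show "Q k c = P (wS (par c C') k) c"
      proof (cases "c = b")
        case True
        then show ?thesis using local_step[OF Qf Qc pi hyp D_def k] pib by simp
      next
        case False
        then have "Suc b \<le> c" using c by simp
        then show ?thesis using C(3) k parc by simp
      qed
    qed
    then show ?case using C'R C'b by blast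
  qed
  obtain C where C: "C \<subseteq> Rset" "\<forall>k\<in>{1..n}. \<forall>c\<ge>0. Q k c = P (wS (par c C) k) c"
    using claim[of 0] by auto
  have "Q = QC C"
  proof (rule ext, rule ext)
    fix k c
    show "Q k c = QC C k c"
    proof (cases "k \<in> {1..n}")
      case True then show ?thesis using C(2) unfolding QC_def by simp
    next
      case False then show ?thesis using Qout[OF False] unfolding QC_def by auto
    qed
  qed
  then show ?thesis using C(1) by blast
qed

lemma type_unique:
  assumes "path_family lam mu n R w1" "path_family lam mu n R w2"
  shows "w1 = w2"
proof
  fix k
  have p1: "w1 permutes {1..n}" and p2: "w2 permutes {1..n}" using assms unfolding path_family_def by blast+
  show "w1 k = w2 k"
  proof (cases "k \<in> {1..n}")
    case True
    have "(R k 0, 0) = Bv mu n (w1 k)" "(R k 0, 0) = Bv mu n (w2 k)"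
      using assms True unfolding path_family_def lattice_path_def by blast+
    then have eq: "Bx (w1 k) = Bx (w2 k)" unfolding Bv_def Bx_def by simp
    have "w1 k \<in> {1..n}" "w2 k \<in> {1..n}"
      using True permutes_in_image[OF p1] permutes_in_image[OF p2] by blast+
    then show ?thesis using eq Bx_strict[of "w1 k" "w2 k"] Bx_strict[of "w2 k" "w1 k"]
      by (cases "w1 k < w2 k"; cases "w2 k < w1 k") auto
  next
    case False
    then show ?thesis using permutes_not_in[OF p1] permutes_not_in[OF p2] by simp
  qed
qed

lemma QC_differ:
  assumes C: "C \<subseteq> Rset" and C': "C' \<subseteq> Rset" and eqp: "par (Suc b) C = par (Suc b) C'"
    and iC: "(i, b) \<in> C" and iC': "(i, b) \<notin> C'"
  shows "QC C \<noteq> QC C'"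
proof
  assume eq: "QC C = QC C'"
  define \<pi> where "\<pi> = wS (par (Suc b) C)"
  have i: "1 \<le> i" "i < n" "dv i b" using iC C unfolding Rset_def by auto
  have iin: "i \<in> {1..n}" using i by simp
  define k where "k = inv \<pi> i"
  have k: "k \<in> {1..n}" "\<pi> k = i" using inv_in[OF pi_perm[OF C, of "Suc b"] iin] unfolding k_def \<pi>_def by auto
  have "wS (par b C) k = swp (Dset b C) i" using pi_step[OF C, of b] k unfolding \<pi>_def by simp
  also have "\<dots> = Suc i" using iC unfolding swp_def Dset_def by simp
  finally have a: "QC C k b = P (Suc i) b" using k unfolding QC_def by simp
  have "wS (par b C') k = swp (Dset b C') i" using pi_step[OF C', of b] k eqp unfolding \<pi>_def by simp
  also have "\<dots> = i"
  proof -
    have "i \<notin> Dset b C'" using iC' unfolding Dset_def by simp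
    moreover have "\<not> (0 < i \<and> i - 1 \<in> Dset b C')"
    proof
      assume h: "0 < i \<and> i - 1 \<in> Dset b C'"
      then have "1 \<le> i - 1" "dv (i - 1) b" using C' unfolding Dset_def Rset_def by auto
      then show False using notriple[of "i - 1" "Suc b"] i unfolding dv_def by auto
    qed
    ultimately show ?thesis unfolding swp_def by auto
  qed
  finally have b: "QC C' k b = P i b" using k unfolding QC_def by simp
  have "P (Suc i) b \<noteq> P i b" using i unfolding dv_def cnt_def by auto
  then show False using a b eq by simp
qed

lemma QC_inj:
  assumes C: "C \<subseteq> Rset" and C': "C' \<subseteq> Rset" and eq: "QC C = QC C'"
  shows "C = C'"
proof (rule ccontr)
  assume ne: "C \<noteq> C'"
  define \<Delta> where "\<Delta> = (C - C') \<union> (C' - C)"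
  have fD: "finite \<Delta>" unfolding \<Delta>_def using C C' finite_Rset finite_subset by blast
  have neD: "\<Delta> \<noteq> {}" using ne unfolding \<Delta>_def by blast
  define bm where "bm = Max (snd ` \<Delta>)"
  have "bm \<in> snd ` \<Delta>" using Max_in[of "snd ` \<Delta>"] fD neD unfolding bm_def by auto
  then obtain x where x: "x \<in> \<Delta>" "snd x = bm" by blast
  have le: "\<And>y. y \<in> \<Delta> \<Longrightarrow> snd y \<le> bm" unfolding bm_def using fD by simp
  have agree: "\<forall>i b'. Suc bm \<le> b' \<longrightarrow> ((i, b') \<in> C \<longleftrightarrow> (i, b') \<in> C')"
  proof (intro allI impI)
    fix i b' assume "Suc bm \<le> b'"
    then have "(i, b') \<notin> \<Delta>" using le by force
    then show "(i, b') \<in> C \<longleftrightarrow> (i, b') \<in> C'" unfolding \<Delta>_def by blast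
  qed
  have eqp: "par (Suc bm) C = par (Suc bm) C'" by (rule par_cong[OF agree])
  obtain i where xi: "x = (i, bm)" using x(2) by (cases x) auto
  show False
  proof (cases "x \<in> C")
    case True
    then have "(i, bm) \<in> C" "(i, bm) \<notin> C'" using x(1) xi unfolding \<Delta>_def by auto
    then show False using QC_differ[OF C C' eqp] eq by blast
  next
    case False
    then have "(i, bm) \<in> C'" "(i, bm) \<notin> C" using x(1) xi unfolding \<Delta>_def by auto
    then show False using QC_differ[OF C' C eqp[symmetric]] eq by metis
  qed
qed

lemma beta_eq:
  "beta lam mu n (edge_mult n P) w = of_nat (card {C. C \<subseteq> Rset \<and> wS (par 0 C) = w})"
proof -
  have "{Q. path_family lam mu n Q w \<and> covers n Q (edge_mult n P)} = QC ` {C. C \<subseteq> Rset \<and> wS (par 0 C) = w}"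
  proof (rule set_eqI, rule iffI)
    fix Q assume "Q \<in> {Q. path_family lam mu n Q w \<and> covers n Q (edge_mult n P)}"
    then have Qf: "path_family lam mu n Q w" and Qc: "covers n Q (edge_mult n P)" by auto
    obtain C where C: "C \<subseteq> Rset" "Q = QC C" using QC_surj[OF Qf Qc] by blast
    have "path_family lam mu n (QC C) w" using Qf C(2) by simp
    then have "w = wS (par 0 C)" using type_unique QC_family[OF C(1)] by blast
    then show "Q \<in> QC ` {C. C \<subseteq> Rset \<and> wS (par 0 C) = w}" using C by blast
  next
    fix Q assume "Q \<in> QC ` {C. C \<subseteq> Rset \<and> wS (par 0 C) = w}"
    then obtain C where "C \<subseteq> Rset" "wS (par 0 C) = w" "Q = QC C" by blast
    then show "Q \<in> {Q. path_family lam mu n Q w \<and> covers n Q (edge_mult n P)}"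
      using QC_family QC_covers by auto
  qed
  moreover have "inj_on QC {C. C \<subseteq> Rset \<and> wS (par 0 C) = w}"
  proof (rule inj_onI)
    fix x y assume "x \<in> {C. C \<subseteq> Rset \<and> wS (par 0 C) = w}" "y \<in> {C. C \<subseteq> Rset \<and> wS (par 0 C) = w}" "QC x = QC y"
    then show "x = y" using QC_inj by blast
  qed
  ultimately show ?thesis unfolding beta_def by (simp add: card_image)
qed

definition rb :: "nat \<Rightarrow> nat" where "rb i = (SOME b. (i, b) \<in> Rset)"

lemma rb: "i \<in> I0 \<Longrightarrow> (i, rb i) \<in> Rset"
  unfolding I0_def rb_def by (rule someI_ex) force

definition TT :: "nat set \<Rightarrow> (nat \<times> nat) set" where "TT X = (\<lambda>i. (i, rb i)) ` X"

lemma TT_sub: "X \<subseteq> I0 \<Longrightarrow> TT X \<subseteq> Rset"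
  unfolding TT_def using rb by auto

lemma par_toggle:
  assumes C: "C \<subseteq> Rset" and X: "X \<subseteq> I0"
  shows "par 0 ((C - TT X) \<union> (TT X - C)) = (par 0 C - X) \<union> (X - par 0 C)"
proof (rule set_eqI)
  fix i
  define Y where "Y = {b. 0 \<le> b \<and> (i, b) \<in> C}"
  have fC: "finite C" using C finite_Rset finite_subset by blast
  have fY: "finite Y" unfolding Y_def by (rule finite_subset[of _ "snd ` C"]) (use fC in force)+
  have pC: "i \<in> par 0 C \<longleftrightarrow> odd (card Y)" unfolding par_def Y_def by simp
  show "i \<in> par 0 ((C - TT X) \<union> (TT X - C)) \<longleftrightarrow> i \<in> (par 0 C - X) \<union> (X - par 0 C)"
  proof (cases "i \<in> X")
    case True
    have e: "{b. 0 \<le> b \<and> (i, b) \<in> (C - TT X) \<union> (TT X - C)} = (Y - {rb i}) \<union> ({rb i} - Y)"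
      using True unfolding Y_def TT_def by auto
    have "odd (card ((Y - {rb i}) \<union> ({rb i} - Y))) \<longleftrightarrow> \<not> odd (card Y)"
    proof (cases "rb i \<in> Y")
      case True
      then have "(Y - {rb i}) \<union> ({rb i} - Y) = Y - {rb i}" by auto
      moreover have "0 < card Y" using True fY by (auto simp: card_gt_0_iff)
      moreover have "card (Y - {rb i}) = card Y - 1" using True fY by simp
      ultimately show ?thesis by (cases "card Y") auto
    next
      case False
      then have "(Y - {rb i}) \<union> ({rb i} - Y) = insert (rb i) Y" by auto
      then show ?thesis using False fY by simp
    qed
    then show ?thesis using True pC unfolding par_def e[symmetric] by auto
  next
    case False
    have e: "{b. 0 \<le> b \<and> (i, b) \<in> (C - TT X) \<union> (TT X - C)} = Y"
      using False unfolding Y_def TT_def by auto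
    then show ?thesis using False pC unfolding par_def by auto
  qed
qed

definition fiber :: "nat set \<Rightarrow> (nat \<times> nat) set set" where
  "fiber S = {C. C \<subseteq> Rset \<and> par 0 C = S}"

lemma fiber_finite: "finite (fiber S)"
  unfolding fiber_def by (rule finite_subset[of _ "Pow Rset"]) (use finite_Rset in auto)

lemma fiber_card:
  assumes S: "S \<subseteq> I0"
  shows "card (fiber S) = card (fiber {})"
proof -
  define g where "g C = (C - TT S) \<union> (TT S - C)" for C
  have gg: "g (g C) = C" for C unfolding g_def by auto
  have TS: "TT S \<subseteq> Rset" by (rule TT_sub[OF S])
  have img: "g ` fiber {} = fiber S"
  proof (rule set_eqI, rule iffI)
    fix D assume "D \<in> g ` fiber {}"
    then obtain C where C: "C \<subseteq> Rset" "par 0 C = {}" "D = g C" unfolding fiber_def by blast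
    have "par 0 D = S" using par_toggle[OF C(1) S] C unfolding g_def by simp
    moreover have "D \<subseteq> Rset" using C TS unfolding g_def by auto
    ultimately show "D \<in> fiber S" unfolding fiber_def by blast
  next
    fix D assume "D \<in> fiber S"
    then have D: "D \<subseteq> Rset" "par 0 D = S" unfolding fiber_def by auto
    have "par 0 (g D) = {}" using par_toggle[OF D(1) S] D unfolding g_def by simp
    moreover have "g D \<subseteq> Rset" using D TS unfolding g_def by auto
    ultimately have "g D \<in> fiber {}" unfolding fiber_def by blast
    then show "D \<in> g ` fiber {}" using gg[of D] by force
  qed
  have "inj_on g (fiber {})" by (rule inj_onI) (metis gg)
  then show ?thesis using card_image img by metis
qed

lemma fiber_disj: "S \<noteq> S' \<Longrightarrow> fiber S \<inter> fiber S' = {}"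
  unfolding fiber_def by auto

lemma fiber0: "card (fiber {}) * 2 ^ card I0 = 2 ^ card Rset"
proof -
  have "Pow Rset = (\<Union>S\<in>Pow I0. fiber S)"
    unfolding fiber_def using par_I0 by auto
  then have "card (Pow Rset) = card (\<Union>S\<in>Pow I0. fiber S)" by simp
  also have "\<dots> = (\<Sum>S\<in>Pow I0. card (fiber S))"
    by (rule card_UN_disjoint) (use finite_I0 fiber_finite fiber_disj in auto)
  also have "\<dots> = (\<Sum>S\<in>Pow I0. card (fiber {}))" by (rule sum.cong) (auto intro: fiber_card)
  also have "\<dots> = card (fiber {}) * 2 ^ card I0" using finite_I0 by (simp add: card_Pow)
  finally show ?thesis using finite_Rset by (simp add: card_Pow)
qed

lemma card_I0_le: "card I0 \<le> card Rset"
  unfolding I0_def by (rule card_image_le[OF finite_Rset])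

lemma fiber0': "card (fiber {}) = 2 ^ (card Rset - card I0)"
proof -
  have "2 ^ card Rset = (2::nat) ^ (card Rset - card I0) * 2 ^ card I0"
    using card_I0_le by (simp add: power_add[symmetric])
  then show ?thesis using fiber0 by simp
qed

lemma count_w:
  "card {C. C \<subseteq> Rset \<and> wS (par 0 C) = w} = 2 ^ (card Rset - card I0) * card {S. S \<subseteq> I0 \<and> w = wS S}"
proof -
  define SW where "SW = {S. S \<subseteq> I0 \<and> w = wS S}"
  have fSW: "finite SW" unfolding SW_def by (rule finite_subset[of _ "Pow I0"]) (use finite_I0 in auto)
  have "{C. C \<subseteq> Rset \<and> wS (par 0 C) = w} = (\<Union>S\<in>SW. fiber S)"
    unfolding SW_def fiber_def using par_I0 by auto
  then have "card {C. C \<subseteq> Rset \<and> wS (par 0 C) = w} = card (\<Union>S\<in>SW. fiber S)" by simp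
  also have "\<dots> = (\<Sum>S\<in>SW. card (fiber S))"
    by (rule card_UN_disjoint) (use fSW fiber_finite fiber_disj in auto)
  also have "\<dots> = (\<Sum>S\<in>SW. card (fiber {}))" by (rule sum.cong) (auto simp: SW_def intro: fiber_card)
  also have "\<dots> = card (fiber {}) * card SW" by simp
  finally show ?thesis unfolding fiber0' SW_def by simp
qed

lemma beta_formula:
  "beta lam mu n (edge_mult n P) = (\<lambda>w. (2::complex) powi int (card Rset - card I0) * BB n I0 w)"
proof
  fix w
  show "beta lam mu n (edge_mult n P) w = (2::complex) powi int (card Rset - card I0) * BB n I0 w"
    unfolding beta_eq count_w BB_card[OF finite_I0 I0_sub] by simp
qed

lemma three_tracks:
  assumes "a \<in> {1..n}" "b \<in> {1..n}" "c \<in> {1..n}" "a \<noteq> b" "b \<noteq> c" "a \<noteq> c"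
    "P a h = P b h" "P b h = P c h"
  shows False
proof -
  have "b = Suc a \<or> Suc b = a" using adj[of a b h] assms by auto
  moreover have "c = Suc b \<or> Suc c = b" using adj[of b c h] assms by auto
  moreover have "c = Suc a \<or> Suc c = a" using adj[of a c h] assms by auto
  ultimately show False by auto
qed

lemma gwd: "gen_wiring_diagram lam mu n (edge_mult n P)"
  unfolding gen_wiring_diagram_def
proof (intro allI impI notI)
  fix Q \<tau> assume h: "path_family lam mu n Q \<tau> \<and> covers n Q (edge_mult n P)"
  assume "\<exists>v i j k. i \<in> {1..n} \<and> j \<in> {1..n} \<and> k \<in> {1..n} \<and> i \<noteq> j \<and> j \<noteq> k \<and> i \<noteq> k
          \<and> v \<in> vertices (Q i) \<and> v \<in> vertices (Q j) \<and> v \<in> vertices (Q k)"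
  then obtain v i j k where ijk: "i \<in> {1..n}" "j \<in> {1..n}" "k \<in> {1..n}" "i \<noteq> j" "j \<noteq> k" "i \<noteq> k"
    and v: "v \<in> vertices (Q i)" "v \<in> vertices (Q j)" "v \<in> vertices (Q k)" by blast
  obtain C where C: "C \<subseteq> Rset" "Q = QC C" using QC_surj h by blast
  obtain b1 where b1: "v = (Q i b1, int b1)" using v(1) unfolding vertices_def by blast
  obtain b2 where b2: "v = (Q j b2, int b2)" using v(2) unfolding vertices_def by blast
  obtain b3 where b3: "v = (Q k b3, int b3)" using v(3) unfolding vertices_def by blast
  have "b2 = b1" "b3 = b1" using b1 b2 b3 by auto
  then have eq: "Q i b1 = Q j b1" "Q j b1 = Q k b1" using b1 b2 b3 by auto
  define \<pi> where "\<pi> = wS (par b1 C)"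
  have pi: "\<pi> permutes {1..n}" unfolding \<pi>_def by (rule pi_perm[OF C(1)])
  have inj: "\<And>x y. \<pi> x = \<pi> y \<Longrightarrow> x = y" using permutes_inj[OF pi] by (metis inj_eq)
  have ins: "\<pi> i \<in> {1..n}" "\<pi> j \<in> {1..n}" "\<pi> k \<in> {1..n}" using permutes_in_image[OF pi] ijk by blast+
  have "P (\<pi> i) b1 = P (\<pi> j) b1" "P (\<pi> j) b1 = P (\<pi> k) b1"
    using eq ijk unfolding C(2) QC_def \<pi>_def by auto
  then show False using three_tracks[OF ins] ijk inj by metis
qed

lemma intersect_iff:
  assumes "1 \<le> i" "i < n"
  shows "paths_intersect (P i) (P (Suc i)) \<longleftrightarrow> i \<in> I0"
proof -
  have "paths_intersect (P i) (P (Suc i)) \<longleftrightarrow> (\<exists>b. cnt i b)"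
    unfolding paths_intersect_def vertices_def cnt_def by auto
  also have "\<dots> \<longleftrightarrow> (\<exists>b. dv i b)"
  proof
    assume "\<exists>b. cnt i b"
    then have c0: "cnt i (LEAST b. cnt i b)" by (rule LeastI_ex)
    define b0 where "b0 = (LEAST b. cnt i b)"
    have "0 < b0" using cnt_pos[OF assms] c0 unfolding b0_def by blast
    then obtain b1 where b1: "b0 = Suc b1" by (cases b0) auto
    have "\<not> cnt i b1" using not_less_Least[of b1 "cnt i"] b1 unfolding b0_def by simp
    then have "dv i b1" using c0 b1 unfolding dv_def b0_def by simp
    then show "\<exists>b. dv i b" by blast
  next
    assume "\<exists>b. dv i b" then show "\<exists>b. cnt i b" unfolding dv_def by blast
  qed
  also have "\<dots> \<longleftrightarrow> i \<in> I0" unfolding I0_def Rset_def using assms by force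
  finally show ?thesis .
qed

lemma mem_vertices: "(x, y) \<in> vertices p \<longleftrightarrow> 0 \<le> y \<and> x = p (nat y)"
  unfolding vertices_def by auto

lemma nat_1_int: "nat (1 + int h) = Suc h" by simp

definition E :: "(nat \<times> nat) set" where
  "E = {(i, h). 1 \<le> i \<and> i < n \<and> cnt i h \<and> \<not> cnt i (Suc h)}"

definition vx :: "nat \<times> nat \<Rightarrow> int \<times> int" where "vx x = (P (fst x) (snd x), int (snd x))"

lemma ess_char:
  "ess_points P i = (\<lambda>h. (P i h, int h)) ` {h. cnt i h \<and> \<not> cnt i (Suc h)}"
proof (rule set_eqI, rule iffI)
  fix v assume v: "v \<in> ess_points P i"
  then obtain h where h: "v = (P i h, int h)" unfolding ess_points_def vertices_def by blast
  have "v \<in> vertices (P (Suc i))" using v unfolding ess_points_def by blast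
  then have c: "cnt i h" using h unfolding cnt_def by (simp add: mem_vertices)
  have "preceding (P i) v (P i (Suc h), int (Suc h))" unfolding preceding_def h by blast
  then have "(P i (Suc h), int (Suc h)) \<notin> vertices (P i) \<inter> vertices (P (Suc i))"
    using v unfolding ess_points_def by blast
  then have "\<not> cnt i (Suc h)" unfolding cnt_def by (auto simp: mem_vertices nat_1_int)
  then show "v \<in> (\<lambda>h. (P i h, int h)) ` {h. cnt i h \<and> \<not> cnt i (Suc h)}" using h c by blast
next
  fix v assume "v \<in> (\<lambda>h. (P i h, int h)) ` {h. cnt i h \<and> \<not> cnt i (Suc h)}"
  then obtain h where h: "v = (P i h, int h)" "cnt i h" "\<not> cnt i (Suc h)" by blast
  have vin: "v \<in> vertices (P i) \<inter> vertices (P (Suc i))" using h unfolding cnt_def by (auto simp: mem_vertices nat_1_int)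
  have p1: "u \<notin> vertices (P i) \<inter> vertices (P (Suc i))" if pre: "preceding (P i) v u" for u
  proof -
    obtain b where "v = (P i b, int b)" "u = (P i (Suc b), int (Suc b))" using pre unfolding preceding_def by blast
    then have "u = (P i (Suc h), int (Suc h))" using h by auto
    then show ?thesis using h unfolding cnt_def by (auto simp: mem_vertices nat_1_int)
  qed
  have p2: "u \<notin> vertices (P i) \<inter> vertices (P (Suc i))" if pre: "preceding (P (Suc i)) v u" for u
  proof -
    obtain b where "v = (P (Suc i) b, int b)" "u = (P (Suc i) (Suc b), int (Suc b))" using pre unfolding preceding_def by blast
    then have "u = (P (Suc i) (Suc h), int (Suc h))" using h by auto
    then show ?thesis using h unfolding cnt_def by (auto simp: mem_vertices nat_1_int)
  qed
  show "v \<in> ess_points P i" unfolding ess_points_def using vin p1 p2 by blast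
qed

lemma all_ess_eq: "all_ess_points n P = vx ` E"
  unfolding all_ess_points_def ess_char E_def vx_def by force

lemma E_top: "x \<in> E \<Longrightarrow> snd x < Ntop"
  unfolding E_def using cnt_top by auto

lemma finite_E: "finite E"
  by (rule finite_subset[of _ "{1..<n} \<times> {..<Ntop}"]) (use E_top in \<open>auto simp: E_def\<close>)

lemma ess_inj:
  assumes "x \<in> E" "y \<in> E" "vx x = vx y"
  shows "x = y"
proof -
  obtain i h i' h' where xy: "x = (i, h)" "y = (i', h')" by (cases x, cases y) auto
  have hh: "h' = h" and pe: "P i' h = P i h" using assms unfolding xy vx_def by auto
  have r: "1 \<le> i" "i < n" "cnt i h" "1 \<le> i'" "i' < n" "cnt i' h" using assms hh unfolding xy E_def by auto
  have "i' = i \<or> (i' = Suc i \<and> cnt i h) \<or> (Suc i' = i \<and> cnt i' h)" using adj[of i i' h] r pe by auto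
  moreover have "\<not> (i' = Suc i)" using notriple[of i h] r by auto
  moreover have "\<not> (Suc i' = i)" using notriple[of i' h] r by auto
  ultimately show ?thesis using xy hh by auto
qed

lemma reach_mono:
  assumes "(u, v) \<in> reach (edge_mult n P)"
  shows "fst v \<le> fst u \<and> snd v \<le> snd u"
  using assms unfolding reach_def
proof (induction rule: rtrancl_induct)
  case base then show ?case by simp
next
  case (step y z)
  then have "0 < edge_mult n P (y, z)" by simp
  then have "{(i, b). i \<in> {1..n} \<and> edge_at (P i) b = (y, z)} \<noteq> {}" unfolding edge_mult_def by (metis card.empty less_irrefl)
  then obtain i b where ib: "i \<in> {1..n}" "edge_at (P i) b = (y, z)" by blast
  then have "y = (P i (Suc b), int (Suc b))" "z = (P i b, int b)" unfolding edge_at_def by auto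
  moreover have "P i b \<le> P i (Suc b)" using P_mono[OF ib(1)] by simp
  ultimately show ?case using step by auto
qed

definition W :: nat where "W = Suc Ntop"
definition key :: "nat \<times> nat \<Rightarrow> nat" where "key x = fst x * W + (Ntop - snd x)"
definition dec :: "nat \<Rightarrow> nat \<times> nat" where "dec m = (m div W, Ntop - m mod W)"

lemma dec_key: "snd x \<le> Ntop \<Longrightarrow> dec (key x) = x"
proof -
  assume a: "snd x \<le> Ntop"
  have lt: "Ntop - snd x < W" unfolding W_def by simp
  have W0: "W \<noteq> 0" unfolding W_def by simp
  have d1: "(Ntop - snd x + fst x * W) div W = fst x + (Ntop - snd x) div W" by (rule div_mult_self1[OF W0])
  have d2: "(fst x * W + (Ntop - snd x)) div W = fst x" using d1 lt by (simp add: add.commute)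
  have m1: "(Ntop - snd x + fst x * W) mod W = (Ntop - snd x) mod W" by (rule mod_mult_self1)
  have m2: "(fst x * W + (Ntop - snd x)) mod W = Ntop - snd x" using m1 lt by (simp add: add.commute)
  have "dec (key x) = (fst x, Ntop - (Ntop - snd x))" unfolding dec_def key_def d2 m2 ..
  then show ?thesis using a by (cases x) auto
qed

lemma key_lt:
  assumes "snd x \<le> Ntop" "snd y \<le> Ntop" "key x < key y"
  shows "fst x < fst y \<or> (fst x = fst y \<and> snd y < snd x)"
proof (rule ccontr)
  assume na: "\<not> ?thesis"
  show False
  proof (cases "fst y < fst x")
    case True
    then have "Suc (fst y) \<le> fst x" by simp
    then have "Suc (fst y) * W \<le> fst x * W" by (rule mult_le_mono1)
    moreover have "key y < Suc (fst y) * W" unfolding key_def W_def by simp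
    moreover have "fst x * W \<le> key x" unfolding key_def by simp
    ultimately show False using assms(3) by simp
  next
    case False
    then have "fst x = fst y" "snd x \<le> snd y" using na by auto
    then show False using assms unfolding key_def by simp
  qed
qed

lemma key_mono:
  assumes "fst x < fst y"
  shows "key x < key y"
proof -
  have "Suc (fst x) * W \<le> fst y * W" using assms by (intro mult_le_mono1) simp
  moreover have "key x < Suc (fst x) * W" unfolding key_def W_def by simp
  moreover have "fst y * W \<le> key y" unfolding key_def by simp
  ultimately show ?thesis by simp
qed

lemma ordering:
  "\<exists>us. compatible_ordering n P (edge_mult n P) us
        \<and> (\<forall>a b i j. a < length us \<and> b < length us \<and> i \<in> {1..<n} \<and> j \<in> {1..<n} \<and> i < j
             \<and> us ! a \<in> ess_points P i \<and> us ! b \<in> ess_points P j \<longrightarrow> a < b)"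
proof -
  define L where "L = sorted_list_of_set (key ` E)"
  define us where "us = map (vx \<circ> dec) L"
  have fK: "finite (key ` E)" using finite_E by simp
  have sL: "sorted_wrt (<) L" unfolding L_def by simp
  have setL: "set L = key ` E" unfolding L_def using fK by simp
  have dL: "distinct L" unfolding L_def by simp
  have hE: "\<And>x. x \<in> E \<Longrightarrow> snd x \<le> Ntop" using E_top by (simp add: less_imp_le)
  have nthL: "\<exists>x\<in>E. L ! a = key x \<and> us ! a = vx x" if "a < length L" for a
  proof -
    have "L ! a \<in> key ` E" using nth_mem[OF that] setL by simp
    then obtain x where x: "x \<in> E" "L ! a = key x" by blast
    then have "us ! a = vx x" unfolding us_def using that dec_key[OF hE[OF x(1)]] by simp
    then show ?thesis using x by blast
  qed
  have len: "length us = length L" unfolding us_def by simp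
  have dist: "distinct us"
    unfolding us_def distinct_map
  proof
    show "distinct L" by (rule dL)
    show "inj_on (vx \<circ> dec) (set L)"
    proof (rule inj_onI)
      fix m1 m2 assume m: "m1 \<in> set L" "m2 \<in> set L" "(vx \<circ> dec) m1 = (vx \<circ> dec) m2"
      obtain x1 where x1: "x1 \<in> E" "m1 = key x1" using m(1) setL by auto
      obtain x2 where x2: "x2 \<in> E" "m2 = key x2" using m(2) setL by auto
      have "vx x1 = vx x2" using m(3) x1 x2 dec_key[OF hE[OF x1(1)]] dec_key[OF hE[OF x2(1)]] by simp
      then have "x1 = x2" using ess_inj x1 x2 by blast
      then show "m1 = m2" using x1 x2 by simp
    qed
  qed
  have setus: "set us = all_ess_points n P"
  proof -
    have "set us = (vx \<circ> dec) ` key ` E" unfolding us_def using setL by simp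
    also have "\<dots> = vx ` E"
    proof -
      have "(vx \<circ> dec) ` key ` E = (\<lambda>x. vx (dec (key x))) ` E" by (simp add: image_comp comp_def)
      also have "\<dots> = vx ` E" by (rule image_cong[OF refl]) (simp add: dec_key hE)
      finally show ?thesis .
    qed
    finally show ?thesis using all_ess_eq by simp
  qed
  have keylt: "L ! a < L ! b" if "a < b" "b < length L" for a b
    using sorted_wrt_nth_less[OF sL that] .
  have reach_ok: "(us ! b, us ! a) \<notin> reach (edge_mult n P)" if ab: "a < b" "b < length us" for a b
  proof
    assume r: "(us ! b, us ! a) \<in> reach (edge_mult n P)"
    obtain xa where xa: "xa \<in> E" "L ! a = key xa" "us ! a = vx xa" using nthL[of a] ab len by auto
    obtain xb where xb: "xb \<in> E" "L ! b = key xb" "us ! b = vx xb" using nthL[of b] ab len by auto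
    have "key xa < key xb" using keylt[of a b] ab len xa xb by simp
    then have k: "fst xa < fst xb \<or> (fst xa = fst xb \<and> snd xb < snd xa)"
      using key_lt hE xa(1) xb(1) by blast
    have m: "P (fst xa) (snd xa) \<le> P (fst xb) (snd xb)" "snd xa \<le> snd xb"
      using reach_mono[OF r] xa xb unfolding vx_def by auto
    show False
    proof (cases "fst xa < fst xb")
      case True
      have ra: "1 \<le> fst xa" "cnt (fst xb) (snd xb)" "fst xb < n" using xa(1) xb(1) unfolding E_def by auto
      have "P (Suc (fst xb)) (snd xb) < P (fst xa) (snd xa)" using G[of "fst xa" "Suc (fst xb)"] ra True by simp
      then show False using m ra unfolding cnt_def by simp
    next
      case False
      then show False using k m by simp
    qed
  qed
  have extra: "a < b" if h: "a < length us" "b < length us" "i \<in> {1..<n}" "j \<in> {1..<n}" "i < j"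
     "us ! a \<in> ess_points P i" "us ! b \<in> ess_points P j" for a b i j
  proof -
    obtain xa where xa: "xa \<in> E" "L ! a = key xa" "us ! a = vx xa" using nthL[of a] h len by auto
    obtain xb where xb: "xb \<in> E" "L ! b = key xb" "us ! b = vx xb" using nthL[of b] h len by auto
    obtain ha where ha: "cnt i ha" "\<not> cnt i (Suc ha)" "us ! a = vx (i, ha)" using h(6) unfolding ess_char vx_def by auto
    obtain hb where hb: "cnt j hb" "\<not> cnt j (Suc hb)" "us ! b = vx (j, hb)" using h(7) unfolding ess_char vx_def by auto
    have "(i, ha) \<in> E" "(j, hb) \<in> E" using ha hb h unfolding E_def by auto
    then have "(i, ha) = xa" "(j, hb) = xb" using ess_inj[of "(i, ha)" xa] ess_inj[of "(j, hb)" xb] xa xb ha hb by auto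
    then have "key xa < key xb" using key_mono h(5) by auto
    then have "L ! a < L ! b" using xa xb by simp
    show "a < b"
    proof (rule ccontr)
      assume "\<not> a < b"
      then consider "a = b" | "b < a" by linarith
      then show False
      proof cases
        case 1 then show False using \<open>L ! a < L ! b\<close> by simp
      next
        case 2 then show False using keylt[of b a] h len \<open>L ! a < L ! b\<close> by simp
      qed
    qed
  qed
  have "compatible_ordering n P (edge_mult n P) us"
    unfolding compatible_ordering_def using dist setus reach_ok by blast
  then show ?thesis using extra by blast
qed

end

lemma BB_sadj:
  assumes I: "I \<subseteq> {1..<n}" and i: "1 \<le> i" "i < n"
  shows "BB n I (sadj i) \<noteq> 0 \<longleftrightarrow> i \<in> I"
proof -
  have fI: "finite I" using I finite_subset by blast
  define SS where "SS = {S. S \<subseteq> I \<and> sadj i = wS S}"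
  have fSS: "finite SS" unfolding SS_def by (rule finite_subset[of _ "Pow I"]) (use fI in auto)
  have "BB n I (sadj i) = of_nat (card SS)" unfolding SS_def by (rule BB_card[OF fI I])
  then have "BB n I (sadj i) \<noteq> 0 \<longleftrightarrow> SS \<noteq> {}" using fSS by simp
  also have "\<dots> \<longleftrightarrow> i \<in> I"
  proof
    assume "SS \<noteq> {}"
    then obtain S where S: "S \<subseteq> I" "sadj i = wS S" unfolding SS_def by blast
    have "finite S" using S(1) fI finite_subset by blast
    then have "i \<in> S" using wS_eq_sadj S(2) by metis
    then show "i \<in> I" using S(1) by blast
  next
    assume "i \<in> I"
    then have "{i} \<in> SS" unfolding SS_def by simp
    then show "SS \<noteq> {}" by blast
  qed
  finally show ?thesis .
qed

theorem mainTheorem2: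
  fixes lam mu :: "nat \<Rightarrow> nat" and n :: nat and H :: subnetwork
    and P :: "nat \<Rightarrow> lpath" and \<sigma> :: "nat \<Rightarrow> nat"
  assumes "is_partition lam" and "is_partition mu" and "part_contained mu lam"
    and "length_le lam n"
    and "\<not> has_3x2_block lam mu"
    and "path_family lam mu n P \<sigma>" and "noncrossing_family n P" and "covers n P H"
  shows "gen_wiring_diagram lam mu n H
    \<and> (\<exists>!I. I \<subseteq> {1..<n} \<and> (\<exists>e::int. beta lam mu n H = (\<lambda>w. (2::complex) powi e * BB n I w)))
    \<and> (\<forall>I. I \<subseteq> {1..<n} \<and> (\<exists>e::int. beta lam mu n H = (\<lambda>w. (2::complex) powi e * BB n I w))
           \<longrightarrow> (\<forall>i\<in>{1..<n}. paths_intersect (P i) (P (Suc i)) \<longleftrightarrow> i \<in> I))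
    \<and> (\<exists>us. compatible_ordering n P H us
        \<and> (\<forall>a b i j. a < length us \<and> b < length us \<and> i \<in> {1..<n} \<and> j \<in> {1..<n} \<and> i < j
             \<and> us ! a \<in> ess_points P i \<and> us ! b \<in> ess_points P j \<longrightarrow> a < b))"
proof -
  interpret cfg lam mu n P \<sigma>
    by unfold_locales (use assms in auto)
  have H: "H = edge_mult n P" using assms(8) unfolding covers_def by (simp add: fun_eq_iff)
  define e0 where "e0 = int (card Rset - card I0)"
  have bf: "beta lam mu n H = (\<lambda>w. (2::complex) powi e0 * BB n I0 w)"
    using beta_formula unfolding H e0_def .
  have key: "I = I0" if I: "I \<subseteq> {1..<n}" and e: "beta lam mu n H = (\<lambda>w. (2::complex) powi e * BB n I w)" for I e
  proof (rule set_eqI)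
    fix i
    show "i \<in> I \<longleftrightarrow> i \<in> I0"
    proof (cases "1 \<le> i \<and> i < n")
      case True
      have "BB n I (sadj i) \<noteq> 0 \<longleftrightarrow> beta lam mu n H (sadj i) \<noteq> 0" using e by simp
      also have "\<dots> \<longleftrightarrow> BB n I0 (sadj i) \<noteq> 0" using bf by simp
      finally show ?thesis using BB_sadj[OF I] BB_sadj[OF I0_sub] True by blast
    next
      case False
      then show ?thesis using I I0_sub by auto
    qed
  qed
  have p1: "gen_wiring_diagram lam mu n H" unfolding H by (rule gwd)
  have p2: "\<exists>!I. I \<subseteq> {1..<n} \<and> (\<exists>e::int. beta lam mu n H = (\<lambda>w. (2::complex) powi e * BB n I w))"
  proof (rule ex1I[of _ I0])
    show "I0 \<subseteq> {1..<n} \<and> (\<exists>e::int. beta lam mu n H = (\<lambda>w. (2::complex) powi e * BB n I0 w))"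
      using I0_sub bf by blast
  next
    fix I assume "I \<subseteq> {1..<n} \<and> (\<exists>e::int. beta lam mu n H = (\<lambda>w. (2::complex) powi e * BB n I w))"
    then show "I = I0" using key by blast
  qed
  have p3: "\<forall>I. I \<subseteq> {1..<n} \<and> (\<exists>e::int. beta lam mu n H = (\<lambda>w. (2::complex) powi e * BB n I w))
           \<longrightarrow> (\<forall>i\<in>{1..<n}. paths_intersect (P i) (P (Suc i)) \<longleftrightarrow> i \<in> I)"
  proof (intro allI impI ballI)
    fix I i assume h: "I \<subseteq> {1..<n} \<and> (\<exists>e::int. beta lam mu n H = (\<lambda>w. (2::complex) powi e * BB n I w))"
      and i: "i \<in> {1..<n}"
    have "I = I0" using h key by blast
    then show "paths_intersect (P i) (P (Suc i)) \<longleftrightarrow> i \<in> I" using intersect_iff i by auto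
  qed
  have p4: "\<exists>us. compatible_ordering n P H us
        \<and> (\<forall>a b i j. a < length us \<and> b < length us \<and> i \<in> {1..<n} \<and> j \<in> {1..<n} \<and> i < j
             \<and> us ! a \<in> ess_points P i \<and> us ! b \<in> ess_points P j \<longrightarrow> a < b)"
    unfolding H by (rule ordering)
  show ?thesis using p1 p2 p3 p4 by blast
qed

end
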